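(* Let $\varphi$ be a smooth real-valued function on a domain $\Omega\subset\mathbb{C}$. Then the following are equivalent: (1) $\sqrt{-1}\partial\overline{\partial}\varphi=0$ on $\Omega$ (i.e. $\varphi$ is harmonic); (2) $L_\varphi\equiv1$ on $\Omega_\delta$; equivalently, for every $a\in\Omega$ and $r\in(0,\delta(a))$ there exists a unique holomorphic function $f$ on $\Delta(a;r)$ with $f(a)=1$ and $\int_{\Delta(a;r)}|f|^2e^{-\varphi}\leq\pi r^2e^{-\varphi(a)}$.
   Context: $\Delta(a;r)=\{z\in\mathbb{C}\mid|z-a|<r\}$; $\delta(a)=\sup\{r>0\mid\Delta(a;r)\subset\Omega\}$; $\Omega_\delta=\{(a,r)\in\Omega\times\mathbb{R}\mid0<r<\delta(a)\}$. $A^2(D,\varphi)$ is the space of holomorphic $f$ on $D$ with $\int_D|f|^2e^{-\varphi}<\infty$ (Lebesgue measure). The $L^2$-extension index is $$L_\varphi(a,r)=\inf\left\{\frac{\int_{\Delta(a;r)}|f|^2e^{-\varphi}}{\pi r^2e^{-\varphi(a)}}\ \middle|\ f\in A^2(\Delta(a;r),\varphi),\ f(a)=1\right\},\quad(a,r)\in\Omega_\delta.$$ *)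

theory Defs
  imports "HOL-Analysis.Analysis"
begin

fun Ck_on :: "nat \<Rightarrow> complex set \<Rightarrow> (complex \<Rightarrow> real) \<Rightarrow> bool" where
  "Ck_on 0 S f = continuous_on S f"
| "Ck_on (Suc n) S f =
     (f differentiable_on S \<and>
      (\<forall>v. Ck_on n S (\<lambda>x. frechet_derivative f (at x) v)))"

definition smooth_on :: "complex set \<Rightarrow> (complex \<Rightarrow> real) \<Rightarrow> bool" where
  "smooth_on S f \<longleftrightarrow> (\<forall>n. Ck_on n S f)"

text \<open>Laplacian: second partial derivatives in the directions 1 and i.
  i d dbar phi = (i/2) (Laplacian phi / 2) dz /\ d(zbar), so it vanishes iff the Laplacian does.\<close>
definition laplacian :: "(complex \<Rightarrow> real) \<Rightarrow> complex \<Rightarrow> real" where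
  "laplacian \<phi> z =
     frechet_derivative (\<lambda>w. frechet_derivative \<phi> (at w) 1) (at z) 1 +
     frechet_derivative (\<lambda>w. frechet_derivative \<phi> (at w) \<i>) (at z) \<i>"

definition harmonic_on :: "complex set \<Rightarrow> (complex \<Rightarrow> real) \<Rightarrow> bool" where
  "harmonic_on \<Omega> \<phi> \<longleftrightarrow> (\<forall>z\<in>\<Omega>. laplacian \<phi> z = 0)"

definition bdist :: "complex set \<Rightarrow> complex \<Rightarrow> ereal" where
  "bdist \<Omega> a = (SUP r \<in> {r::real. r > 0 \<and> ball a r \<subseteq> \<Omega>}. ereal r)"

definition Omega_delta :: "complex set \<Rightarrow> (complex \<times> real) set" where
  "Omega_delta \<Omega> = {(a, r). a \<in> \<Omega> \<and> 0 < r \<and> ereal r < bdist \<Omega> a}"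

definition A2 :: "complex set \<Rightarrow> (complex \<Rightarrow> real) \<Rightarrow> (complex \<Rightarrow> complex) set" where
  "A2 D \<phi> = {f. f holomorphic_on D \<and>
      set_integrable lborel D (\<lambda>z. (cmod (f z))\<^sup>2 * exp (- \<phi> z))}"

definition L_index :: "(complex \<Rightarrow> real) \<Rightarrow> complex \<Rightarrow> real \<Rightarrow> real" where
  "L_index \<phi> a r = Inf
     {(set_lebesgue_integral lborel (ball a r) (\<lambda>z. (cmod (f z))\<^sup>2 * exp (- \<phi> z)))
        / (pi * r\<^sup>2 * exp (- \<phi> a)) | f. f \<in> A2 (ball a r) \<phi> \<and> f a = 1}"

end

theory Submission
  imports Defs "HOL-Complex_Analysis.Complex_Analysis"
begin

lemma lborel_complex:
  "(lborel :: complex measure) = distr (lborel \<Otimes>\<^sub>M lborel) borel (\<lambda>(x,y). Complex x y)"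
proof (rule lborel_eqI)
  fix l u :: complex
  assume le: "\<And>b. b \<in> Basis \<Longrightarrow> l \<bullet> b \<le> u \<bullet> b"
  have "(\<lambda>(x,y). Complex x y) -` box l u \<inter> space (lborel \<Otimes>\<^sub>M lborel) =
        {Re l<..<Re u} \<times> {Im l<..<Im u}"
    by (auto simp: box_def Basis_complex_def space_pair_measure)
  moreover have "(\<lambda>(x,y). Complex x y) \<in> borel_measurable (lborel \<Otimes>\<^sub>M lborel)"
    unfolding case_prod_beta' Complex_eq by measurable
  ultimately show "emeasure (distr (lborel \<Otimes>\<^sub>M lborel) borel (\<lambda>(x, y). Complex x y)) (box l u) =
      (\<Prod>b\<in>Basis. (u - l) \<bullet> b)"
    using le[of 1] le[of \<i>]
    by (simp add: emeasure_distr lborel.emeasure_pair_measure_Times Basis_complex_def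
        ennreal_mult[symmetric] inner_complex_def)
qed simp

lemma nn_integral_complex_snd:
  assumes f[measurable]: "f \<in> borel_measurable borel"
  shows "(\<integral>\<^sup>+ z. f z \<partial>lborel) = (\<integral>\<^sup>+ y. \<integral>\<^sup>+ x. f (Complex x y) \<partial>lborel \<partial>lborel)"
proof -
  have m: "(\<lambda>(x,y). Complex x y) \<in> borel_measurable (lborel \<Otimes>\<^sub>M lborel)"
    unfolding case_prod_beta' Complex_eq by measurable
  have "(\<integral>\<^sup>+ z. f z \<partial>lborel) = (\<integral>\<^sup>+ p. f (case p of (x,y) \<Rightarrow> Complex x y) \<partial>(lborel \<Otimes>\<^sub>M lborel))"
    by (subst lborel_complex) (simp add: nn_integral_distr m)
  also have "\<dots> = (\<integral>\<^sup>+ y. \<integral>\<^sup>+ x. f (Complex x y) \<partial>lborel \<partial>lborel)"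
    by (subst lborel_pair.nn_integral_snd[symmetric]) (use m in auto)
  finally show ?thesis .
qed

lemma nn_integral_complex_fst:
  assumes f[measurable]: "f \<in> borel_measurable borel"
  shows "(\<integral>\<^sup>+ z. f z \<partial>lborel) = (\<integral>\<^sup>+ x. \<integral>\<^sup>+ y. f (Complex x y) \<partial>lborel \<partial>lborel)"
proof -
  have m: "(\<lambda>(x,y). Complex x y) \<in> borel_measurable (lborel \<Otimes>\<^sub>M lborel)"
    unfolding case_prod_beta' Complex_eq by measurable
  have "(\<integral>\<^sup>+ z. f z \<partial>lborel) = (\<integral>\<^sup>+ p. f (case p of (x,y) \<Rightarrow> Complex x y) \<partial>(lborel \<Otimes>\<^sub>M lborel))"
    by (subst lborel_complex) (simp add: nn_integral_distr m)
  also have "\<dots> = (\<integral>\<^sup>+ x. \<integral>\<^sup>+ y. f (Complex x y) \<partial>lborel \<partial>lborel)"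
    using lborel.nn_integral_fst[OF measurable_compose[OF m f]] by (simp add: case_prod_beta')
  finally show ?thesis .
qed

lemma nn_integral_real_shift:
  assumes [measurable]: "g \<in> borel_measurable borel"
  shows "(\<integral>\<^sup>+ x. g (x + c) \<partial>lborel) = (\<integral>\<^sup>+ x. g x \<partial>(lborel::real measure))"
proof -
  have "(\<integral>\<^sup>+ x. g x \<partial>(lborel::real measure)) = (\<integral>\<^sup>+ x. g x \<partial>(distr lborel borel ((+) c)))"
    by (simp add: lborel_distr_plus)
  also have "\<dots> = (\<integral>\<^sup>+ x. g (c + x) \<partial>lborel)"
    by (simp add: nn_integral_distr)
  finally show ?thesis by (simp add: add.commute)
qed

lemma shear1_nn:
  assumes f[measurable]: "f \<in> borel_measurable borel"
  shows "(\<integral>\<^sup>+ z. f (z + of_real (t * Im z)) \<partial>lborel) = (\<integral>\<^sup>+ z. f z \<partial>lborel)"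
proof -
  have [measurable]: "(\<lambda>z. f (z + of_real (t * Im z))) \<in> borel_measurable borel" by measurable
  have eq: "Complex x y + of_real (t * Im (Complex x y)) = Complex (x + t*y) y" for x y
    by (simp add: complex_eq_iff)
  have "(\<integral>\<^sup>+ z. f (z + of_real (t * Im z)) \<partial>lborel) =
        (\<integral>\<^sup>+ y. \<integral>\<^sup>+ x. f (Complex (x + t*y) y) \<partial>lborel \<partial>lborel)"
    by (subst nn_integral_complex_snd) (simp_all, intro nn_integral_cong arg_cong[where f=f], simp add: complex_eq_iff)
  also have "\<dots> = (\<integral>\<^sup>+ y. \<integral>\<^sup>+ x. f (Complex x y) \<partial>lborel \<partial>lborel)"
    unfolding Complex_eq
    by (intro nn_integral_cong nn_integral_real_shift[where g = "\<lambda>x. f (complex_of_real x + \<i> * complex_of_real _)"]) measurable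
  also have "\<dots> = (\<integral>\<^sup>+ z. f z \<partial>lborel)"
    by (subst nn_integral_complex_snd) simp_all
  finally show ?thesis .
qed

lemma shear2_nn:
  assumes f[measurable]: "f \<in> borel_measurable borel"
  shows "(\<integral>\<^sup>+ z. f (z + \<i> * of_real (t * Re z)) \<partial>lborel) = (\<integral>\<^sup>+ z. f z \<partial>lborel)"
proof -
  have [measurable]: "(\<lambda>z. f (z + \<i> * of_real (t * Re z))) \<in> borel_measurable borel" by measurable
  have eq: "Complex x y + \<i> * of_real (t * Re (Complex x y)) = Complex x (y + t*x)" for x y
    by (simp add: complex_eq_iff)
  have "(\<integral>\<^sup>+ z. f (z + \<i> * of_real (t * Re z)) \<partial>lborel) =
        (\<integral>\<^sup>+ x. \<integral>\<^sup>+ y. f (Complex x (y + t*x)) \<partial>lborel \<partial>lborel)"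
    by (subst nn_integral_complex_fst) (simp_all, intro nn_integral_cong arg_cong[where f=f], simp add: complex_eq_iff)
  also have "\<dots> = (\<integral>\<^sup>+ x. \<integral>\<^sup>+ y. f (Complex x y) \<partial>lborel \<partial>lborel)"
    unfolding Complex_eq
    by (intro nn_integral_cong nn_integral_real_shift[where g = "\<lambda>y. f (complex_of_real _ + \<i> * complex_of_real y)"]) measurable
  also have "\<dots> = (\<integral>\<^sup>+ z. f z \<partial>lborel)"
    by (subst nn_integral_complex_fst) simp_all
  finally show ?thesis .
qed

lemma distr_lborel_eqI:
  fixes T :: "complex \<Rightarrow> complex"
  assumes T[measurable]: "T \<in> borel_measurable borel"
  assumes nn: "\<And>f. f \<in> borel_measurable borel \<Longrightarrow> (\<integral>\<^sup>+ z. f (T z) \<partial>lborel) = (\<integral>\<^sup>+ z. f z \<partial>lborel)"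
  shows "distr lborel borel T = lborel"
proof (rule measure_eqI)
  fix A :: "complex set" assume A: "A \<in> sets (distr lborel borel T)"
  then have [measurable]: "A \<in> sets borel" by simp
  have "emeasure (distr lborel borel T) A = emeasure lborel (T -` A)"
    by (simp add: emeasure_distr)
  also have "\<dots> = (\<integral>\<^sup>+ z. indicator (T -` A) z \<partial>lborel)"
    using measurable_sets_borel[OF T \<open>A \<in> sets borel\<close>] by (simp add: nn_integral_indicator)
  also have "\<dots> = (\<integral>\<^sup>+ z. indicator A (T z) \<partial>lborel)"
    by (simp add: indicator_def)
  also have "\<dots> = (\<integral>\<^sup>+ z. indicator A z \<partial>lborel)"
    by (rule nn) simp
  finally show "emeasure (distr lborel borel T) A = emeasure lborel A" by simp
qed simp

lemma rotation_lborel: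
  fixes \<omega> :: complex
  assumes "cmod \<omega> = 1" "\<omega> \<noteq> -1"
  shows "distr lborel borel (\<lambda>z. \<omega> * z) = lborel"
proof -
  define a where "a = Re \<omega>"
  define b where "b = Im \<omega>"
  have ab: "a^2 + b^2 = 1" using assms(1) unfolding a_def b_def cmod_def by simp
  have "a \<noteq> -1"
  proof
    assume "a = -1" then have "b = 0" using ab by simp
    then show False using assms(2) \<open>a = -1\<close> unfolding a_def b_def by (simp add: complex_eq_iff)
  qed
  then have a1: "1 + a \<noteq> 0" by simp
  define \<alpha> where "\<alpha> = - b / (1 + a)"
  define X where "X = (\<lambda>z::complex. z + of_real (\<alpha> * Im z))"
  define Y where "Y = (\<lambda>z::complex. z + \<i> * of_real (b * Re z))"
  have [measurable]: "X \<in> borel_measurable borel" "Y \<in> borel_measurable borel"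
    unfolding X_def Y_def by measurable
  have ab2: "b*b = (1 - a) * (1 + a)" using ab by (simp add: power2_eq_square algebra_simps)
  have k1: "\<alpha> * b = a - 1" unfolding \<alpha>_def using a1 ab2
    by (simp add: field_simps)
  have k2: "\<alpha> * (1 + a) = - b" unfolding \<alpha>_def using a1 by (simp add: field_simps)
  have key: "1 + \<alpha> * b = a" "\<alpha> * (2 + \<alpha> * b) = - b"
    using k1 k2 by (auto simp: algebra_simps)
  have comp: "(\<lambda>z. \<omega> * z) = X \<circ> Y \<circ> X"
  proof
    fix z :: complex
    have "(X \<circ> Y \<circ> X) z = Complex ((1 + \<alpha> * b) * Re z + (\<alpha> * (2 + \<alpha> * b)) * Im z)
                                  (b * Re z + (1 + \<alpha> * b) * Im z)"
      by (simp add: X_def Y_def complex_eq_iff algebra_simps)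
    also have "\<dots> = \<omega> * z" unfolding key by (simp add: complex_eq_iff a_def b_def)
    finally show "\<omega> * z = (X \<circ> Y \<circ> X) z" ..
  qed
  have dX: "distr lborel borel X = lborel"
    by (rule distr_lborel_eqI) (simp, unfold X_def, erule shear1_nn)
  have dY: "distr lborel borel Y = lborel"
    by (rule distr_lborel_eqI) (simp, unfold Y_def, erule shear2_nn)
  have "distr lborel borel (X \<circ> Y \<circ> X) = distr (distr (distr lborel borel X) borel Y) borel X"
    by (simp add: distr_distr comp_assoc)
  also have "\<dots> = lborel" by (simp add: dX dY)
  finally show ?thesis by (simp only: comp)
qed

lemma ball_borel[measurable]: "ball (a::complex) r \<in> sets borel"
  by simp
lemma cball_borel[measurable]: "cball (a::complex) r \<in> sets borel"
  by simp
lemma power_borel[measurable]: "(\<lambda>z::complex. z ^ n) \<in> borel_measurable borel"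
  by (intro borel_measurable_continuous_onI continuous_intros)

lemma integral_translate_complex:
  fixes f :: "complex \<Rightarrow> 'b::{banach, second_countable_topology}"
  assumes [measurable]: "f \<in> borel_measurable borel"
  shows "integral\<^sup>L lborel f = integral\<^sup>L lborel (\<lambda>z. f (a + z))"
proof -
  have "integral\<^sup>L lborel f = integral\<^sup>L (distr lborel borel ((+) a)) f"
    by (simp add: lborel_distr_plus)
  also have "\<dots> = integral\<^sup>L lborel (\<lambda>z. f (a + z))"
    by (rule integral_distr) simp_all
  finally show ?thesis .
qed

lemma integral_rotate_complex:
  fixes f :: "complex \<Rightarrow> 'b::{banach, second_countable_topology}"
  assumes [measurable]: "f \<in> borel_measurable borel" and "cmod \<omega> = 1" "\<omega> \<noteq> -1"
  shows "integral\<^sup>L lborel f = integral\<^sup>L lborel (\<lambda>z. f (\<omega> * z))"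
proof -
  have "integral\<^sup>L lborel f = integral\<^sup>L (distr lborel borel (\<lambda>z. \<omega> * z)) f"
    by (simp add: rotation_lborel assms)
  also have "\<dots> = integral\<^sup>L lborel (\<lambda>z. f (\<omega> * z))"
    by (rule integral_distr) simp_all
  finally show ?thesis .
qed

lemma integral_ball_power_zero:
  assumes "n \<ge> 1"
  shows "integral\<^sup>L lborel (\<lambda>z. indicator (ball a s) z *\<^sub>R (z - a) ^ n) = (0::complex)"
proof -
  define I where "I = integral\<^sup>L lborel (\<lambda>z. indicator (ball 0 s) z *\<^sub>R (z::complex) ^ n)"
  define \<omega> where "\<omega> = cis (pi / (n+1))"
  have w1: "cmod \<omega> = 1" by (simp add: \<omega>_def)
  have "Re \<omega> \<ge> 0" unfolding \<omega>_def
    using assms by (auto intro!: cos_ge_zero simp: field_simps)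
  then have w2: "\<omega> \<noteq> -1" by auto
  have "sin (real n * (pi / (n+1))) > 0"
  proof (rule sin_gt_zero)
    have "real n > 0" using assms by simp
    then show "0 < real n * (pi / (n+1))" by simp
    show "real n * (pi / (n+1)) < pi" by (simp add: field_simps)
  qed
  moreover have "\<omega> ^ n = cis (real n * (pi / (n+1)))" unfolding \<omega>_def by (rule Complex.DeMoivre)
  ultimately have wn: "\<omega> ^ n \<noteq> 1" by (auto simp: complex_eq_iff)
  have "I = integral\<^sup>L lborel (\<lambda>z. indicator (ball 0 s) (\<omega> * z) *\<^sub>R (\<omega> * z) ^ n)"
    unfolding I_def by (rule integral_rotate_complex[OF _ w1 w2]) measurable
  also have "\<dots> = integral\<^sup>L lborel (\<lambda>z. \<omega> ^ n * (indicator (ball 0 s) z *\<^sub>R z ^ n))"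
    by (intro Bochner_Integration.integral_cong refl)
       (simp add: indicator_def norm_mult w1 power_mult_distrib)
  also have "\<dots> = \<omega> ^ n * I" unfolding I_def by (rule integral_mult_right_zero)
  finally have "(1 - \<omega>^n) * I = 0" by (simp add: algebra_simps)
  with wn have I0: "I = 0" by simp
  have "integral\<^sup>L lborel (\<lambda>z. indicator (ball a s) z *\<^sub>R (z - a) ^ n) =
        integral\<^sup>L lborel (\<lambda>z. indicator (ball a s) (a + z) *\<^sub>R (a + z - a) ^ n)"
    by (rule integral_translate_complex) measurable
  also have "\<dots> = I" unfolding I_def
    by (intro Bochner_Integration.integral_cong refl) (simp add: indicator_def dist_norm)
  finally show ?thesis using I0 by simp
qed

lemma integrable_ball_cont:
  fixes f :: "complex \<Rightarrow> 'b::{banach, second_countable_topology}"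
  assumes "continuous_on (cball a s) f"
  shows "integrable lborel (\<lambda>z. indicator (ball a s) z *\<^sub>R f z)"
proof -
  have "set_integrable lborel (cball a s) f"
    unfolding set_integrable_def by (rule borel_integrable_compact) (simp_all add: assms)
  then have "set_integrable lborel (ball a s) f"
    by (rule set_integrable_subset) auto
  then show ?thesis unfolding set_integrable_def .
qed

lemma measure_ball_complex: "s \<ge> 0 \<Longrightarrow> measure lborel (ball (a::complex) s) = pi * s^2"
  using content_ball[of s a] by (simp add: unit_ball_vol_2)

lemma emeasure_ball_complex: "s \<ge> 0 \<Longrightarrow> emeasure lborel (ball (a::complex) s) = ennreal (pi * s^2)"
  using emeasure_ball[of s a] by (simp add: unit_ball_vol_2 mult.commute)

lemma integral_ball_const:
  assumes "s \<ge> 0"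
  shows "integral\<^sup>L lborel (\<lambda>z. indicator (ball (a::complex) s) z *\<^sub>R (c::'b::{banach, second_countable_topology})) = (pi * s^2) *\<^sub>R c"
proof -
  have "integral\<^sup>L lborel (\<lambda>z. indicator (ball (a::complex) s) z *\<^sub>R c) =
        integral\<^sup>L lborel (indicator (ball a s)) *\<^sub>R c"
    by (rule integral_scaleR_left)
       (intro integrable_real_indicator, simp, use emeasure_ball_complex[OF assms, of a] in simp)
  also have "\<dots> = (pi * s^2) *\<^sub>R c"
    using measure_ball_complex[OF assms, of a] by simp
  finally show ?thesis .
qed

lemma mean_value_ball:
  assumes hol: "k holomorphic_on ball a R" and s: "0 \<le> s" "s < R"
  shows "integral\<^sup>L lborel (\<lambda>z. indicator (ball a s) z *\<^sub>R k z) = of_real (pi * s^2) * k a"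
proof -
  define c where "c n = (deriv ^^ n) k a / fact n" for n
  have sums: "(\<lambda>n. c n * (w - a) ^ n) sums k w" if "w \<in> ball a R" for w
    unfolding c_def using holomorphic_power_series[OF hol that] by simp
  define s' where "s' = (s + R) / 2"
  have s': "s < s'" "s' < R" using s unfolding s'_def by auto
  have "summable (\<lambda>n. c n * (of_real s') ^ n)"
    using sums[of "a + of_real s'"] s' s by (auto simp: dist_norm sums_iff)
  then have "summable (\<lambda>n. norm (c n * (of_real s :: complex) ^ n))"
    by (rule powser_insidea) (use s s' in auto)
  then have summ: "summable (\<lambda>n. norm (c n) * s ^ n)"
    using s by (simp add: norm_mult norm_power)
  define M where "M = (\<Sum>n. norm (c n) * s ^ n)"
  define P where "P N z = indicator (ball a s) z *\<^sub>R (\<Sum>n<N. c n * (z - a) ^ n)" for N z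
  define F where "F z = indicator (ball a s) z *\<^sub>R k z" for z
  have contk: "continuous_on (cball a s) k"
    using holomorphic_on_imp_continuous_on[OF hol] by (rule continuous_on_subset) (use s in auto)
  have intP: "integral\<^sup>L lborel (P N) = of_real (pi * s^2) * k a" if "N \<ge> 1" for N
  proof -
    have "integral\<^sup>L lborel (P N) = (\<Sum>n<N. integral\<^sup>L lborel (\<lambda>z. c n * (indicator (ball a s) z *\<^sub>R (z - a) ^ n)))"
    proof -
      have "P N = (\<lambda>z. \<Sum>n<N. c n * (indicator (ball a s) z *\<^sub>R (z - a) ^ n))"
        unfolding P_def scaleR_sum_right by (simp add: scaleR_conv_of_real algebra_simps)
      then show ?thesis
        by (simp only:) (rule Bochner_Integration.integral_sum, 
             auto intro!: integrable_mult_right integrable_ball_cont continuous_intros)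
    qed
    also have "\<dots> = (\<Sum>n<N. c n * integral\<^sup>L lborel (\<lambda>z. indicator (ball a s) z *\<^sub>R (z - a) ^ n))"
      by (intro sum.cong refl integral_mult_right_zero)
    also have "\<dots> = (\<Sum>n\<in>{0}. c n * integral\<^sup>L lborel (\<lambda>z. indicator (ball a s) z *\<^sub>R (z - a) ^ n))"
      by (rule sum.mono_neutral_right) (use that in \<open>auto simp: integral_ball_power_zero\<close>)
    also have "\<dots> = c 0 * ((pi * s^2) *\<^sub>R 1)"
      using integral_ball_const[OF s(1), of a "1::complex"] by simp
    also have "c 0 = k a" by (simp add: c_def)
    finally show ?thesis by (simp add: scaleR_conv_of_real)
  qed
  have "(\<lambda>N. integral\<^sup>L lborel (P N)) \<longlonglongrightarrow> integral\<^sup>L lborel F"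
  proof (rule integral_dominated_convergence[where w = "\<lambda>z. indicator (ball a s) z * M"])
    show "F \<in> borel_measurable lborel"
      unfolding F_def using integrable_ball_cont[OF contk] by (simp add: borel_measurable_integrable)
    show "P N \<in> borel_measurable lborel" for N
      unfolding P_def by (intro borel_measurable_integrable integrable_ball_cont continuous_intros)
    show "integrable lborel (\<lambda>z. indicator (ball a s) z * M)"
      using integrable_ball_cont[of a s "\<lambda>_. M"] by simp
    show "AE z in lborel. (\<lambda>N. P N z) \<longlonglongrightarrow> F z"
    proof (rule AE_I2)
      fix z show "(\<lambda>N. P N z) \<longlonglongrightarrow> F z"
      proof (cases "z \<in> ball a s")
        case True
        then have "z \<in> ball a R" using s by auto
        from sums[OF this] show ?thesis
          unfolding P_def F_def sums_def using True by simp
      qed (simp add: P_def F_def)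
    qed
    show "AE z in lborel. norm (P N z) \<le> indicator (ball a s) z * M" for N
    proof (rule AE_I2)
      fix z show "norm (P N z) \<le> indicator (ball a s) z * M"
      proof (cases "z \<in> ball a s")
        case True
        have "norm (\<Sum>n<N. c n * (z - a) ^ n) \<le> (\<Sum>n<N. norm (c n) * s ^ n)"
        proof (rule order.trans[OF norm_sum sum_mono])
          fix n
          have "norm (z - a) \<le> s" using True by (simp add: dist_norm norm_minus_commute)
          then show "norm (c n * (z - a) ^ n) \<le> norm (c n) * s ^ n"
            by (simp add: norm_mult norm_power mult_left_mono power_mono)
        qed
        also have "\<dots> \<le> M" unfolding M_def
          by (rule sum_le_suminf) (use summ s in auto)
        finally show ?thesis using True by (simp add: P_def)
      qed (simp add: P_def)
    qed
  qed
  moreover have "(\<lambda>N. integral\<^sup>L lborel (P N)) \<longlonglongrightarrow> of_real (pi * s^2) * k a"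
    by (rule tendsto_eventually) (use intP in \<open>auto intro!: eventually_sequentiallyI[of 1]\<close>)
  ultimately have "integral\<^sup>L lborel F = of_real (pi * s^2) * k a"
    using LIMSEQ_unique by blast
  then show ?thesis unfolding F_def .
qed

lemma cmod_add_sq: "(cmod (u + v))^2 = (cmod u)^2 + 2 * Re (cnj u * v) + (cmod v)^2"
  unfolding cmod_power2 by (simp add: power2_eq_square algebra_simps)

lemma pythag_ball:
  assumes hol: "k holomorphic_on ball a R" and s: "0 \<le> s" "s < R"
  shows "integral\<^sup>L lborel (\<lambda>z. indicator (ball a s) z * (cmod (k z))^2) =
         pi * s^2 * (cmod (k a))^2 + integral\<^sup>L lborel (\<lambda>z. indicator (ball a s) z * (cmod (k z - k a))^2)"
proof -
  have contk: "continuous_on (cball a s) k"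
    using holomorphic_on_imp_continuous_on[OF hol] by (rule continuous_on_subset) (use s in auto)
  have i1: "integrable lborel (\<lambda>z. indicator (ball a s) z *\<^sub>R (k z - k a))"
    by (intro integrable_ball_cont continuous_intros contk)
  have "integral\<^sup>L lborel (\<lambda>z. indicator (ball a s) z *\<^sub>R (k z - k a)) =
        integral\<^sup>L lborel (\<lambda>z. indicator (ball a s) z *\<^sub>R k z) - integral\<^sup>L lborel (\<lambda>z. indicator (ball a s) z *\<^sub>R k a)"
    by (subst Bochner_Integration.integral_diff[symmetric])
       (auto intro!: integrable_ball_cont continuous_intros contk Bochner_Integration.integral_cong simp: algebra_simps)
  also have "\<dots> = 0"
    using mean_value_ball[OF hol s] integral_ball_const[OF s(1), of a "k a"]
    by (simp add: scaleR_conv_of_real measure_ball_complex[OF s(1)])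
  finally have z0: "integral\<^sup>L lborel (\<lambda>z. indicator (ball a s) z *\<^sub>R (k z - k a)) = 0" .
  have cross: "integral\<^sup>L lborel (\<lambda>z. Re (cnj (k a) * (indicator (ball a s) z *\<^sub>R (k z - k a)))) = 0"
  proof -
    have bl: "bounded_linear (\<lambda>w. Re (cnj (k a) * w))"
      by (intro bounded_linear_compose[OF bounded_linear_Re] bounded_linear_mult_right)
    show ?thesis
      using integral_bounded_linear[OF bl i1] z0 by simp
  qed
  have "integral\<^sup>L lborel (\<lambda>z. indicator (ball a s) z * (cmod (k z))^2) =
        integral\<^sup>L lborel (\<lambda>z. indicator (ball a s) z * (cmod (k a))^2 +
          (2 * Re (cnj (k a) * (indicator (ball a s) z *\<^sub>R (k z - k a))) +
           indicator (ball a s) z * (cmod (k z - k a))^2))"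
  proof (rule Bochner_Integration.integral_cong[OF refl])
    fix z
    have "k z = k a + (k z - k a)" by simp
    then have "(cmod (k z))^2 = (cmod (k a))^2 + 2 * Re (cnj (k a) * (k z - k a)) + (cmod (k z - k a))^2"
      by (metis cmod_add_sq)
    then show "indicator (ball a s) z * (cmod (k z))^2 = indicator (ball a s) z * (cmod (k a))^2 +
          (2 * Re (cnj (k a) * (indicator (ball a s) z *\<^sub>R (k z - k a))) +
           indicator (ball a s) z * (cmod (k z - k a))^2)"
      by (simp add: indicator_def)
  qed
  also have "\<dots> = integral\<^sup>L lborel (\<lambda>z. indicator (ball a s) z * (cmod (k a))^2) +
          (2 * integral\<^sup>L lborel (\<lambda>z. Re (cnj (k a) * (indicator (ball a s) z *\<^sub>R (k z - k a)))) +
           integral\<^sup>L lborel (\<lambda>z. indicator (ball a s) z * (cmod (k z - k a))^2))"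
  proof -
    have ia: "integrable lborel (\<lambda>z. indicator (ball a s) z * (cmod (k a))^2)"
      using integrable_ball_cont[of a s "\<lambda>_. (cmod (k a))^2"] by simp
    have ib: "integrable lborel (\<lambda>z. Re (cnj (k a) * (indicator (ball a s) z *\<^sub>R (k z - k a))))"
      using i1 by (intro integrable_Re integrable_mult_right)
    have ic: "integrable lborel (\<lambda>z. indicator (ball a s) z * (cmod (k z - k a))^2)"
      using integrable_ball_cont[of a s "\<lambda>z. (cmod (k z - k a))^2"] contk
      by (simp add: continuous_intros)
    show ?thesis
      using ia ib ic by simp
  qed
  also have "\<dots> = pi * s^2 * (cmod (k a))^2 + integral\<^sup>L lborel (\<lambda>z. indicator (ball a s) z * (cmod (k z - k a))^2)"
    using cross integral_ball_const[OF s(1), of a "(cmod (k a))^2"] by simp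
  finally show ?thesis .
qed

lemma lin_decomp:
  fixes T :: "complex \<Rightarrow> real"
  assumes "linear T"
  shows "T h = Re h * T 1 + Im h * T \<i>"
proof -
  have "h = Re h *\<^sub>R 1 + Im h *\<^sub>R \<i>" by (simp add: complex_eq_iff)
  then have "T h = T (Re h *\<^sub>R 1 + Im h *\<^sub>R \<i>)" by simp
  also have "\<dots> = Re h * T 1 + Im h * T \<i>"
    using assms by (simp add: linear_add linear_scale)
  finally show ?thesis .
qed

lemma fd_works:
  assumes "f differentiable (at x)"
  shows "(f has_derivative frechet_derivative f (at x)) (at x)"
  using assms frechet_derivative_works by blast

lemma fd_linear:
  assumes "f differentiable (at x)"
  shows "linear (frechet_derivative f (at x))"
  using has_derivative_bounded_linear[OF fd_works[OF assms]] bounded_linear.linear by blast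

lemma diff_on_open_at:
  assumes "f differentiable_on S" "open S" "x \<in> S"
  shows "f differentiable (at x)"
  using assms by (metis at_within_open differentiable_on_def)

lemma dir_deriv:
  fixes \<phi> :: "complex \<Rightarrow> real"
  assumes "\<phi> differentiable (at (b + of_real x * v))"
  shows "((\<lambda>t. \<phi> (b + of_real t * v)) has_real_derivative
           (frechet_derivative \<phi> (at (b + of_real x * v)) v)) (at x)"
proof -
  let ?D = "frechet_derivative \<phi> (at (b + of_real x * v))"
  have lin: "linear ?D" by (rule fd_linear[OF assms])
  have g: "((\<lambda>t. b + of_real t * v) has_derivative (\<lambda>t. of_real t * v)) (at x)"
    by (auto intro!: derivative_eq_intros)
  have "((\<lambda>t. \<phi> (b + of_real t * v)) has_derivative (\<lambda>t. ?D (of_real t * v))) (at x)"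
    by (rule has_derivative_compose[OF g fd_works[OF assms]])
  moreover have "(\<lambda>t. ?D (of_real t * v)) = (\<lambda>t. ?D v * t)"
  proof
    fix t
    have "?D (of_real t * v) = ?D (t *\<^sub>R v)" by (simp add: scaleR_conv_of_real)
    also have "\<dots> = t * ?D v" using lin by (simp add: linear_scale)
    finally show "?D (of_real t * v) = ?D v * t" by simp
  qed
  ultimately show ?thesis by (simp add: has_field_derivative_def)
qed

lemma deriv_alt_bound:
  assumes "f differentiable (at w)" "e > 0"
  obtains d where "d > 0" "\<And>q. cmod q < d \<Longrightarrow>
     norm (f (w + q) - f w - frechet_derivative f (at w) q) \<le> e * cmod q"
proof -
  from fd_works[OF assms(1), unfolded has_derivative_at_alt] assms(2)
  obtain d where "d > 0" and d: "\<forall>y. norm (y - w) < d \<longrightarrow>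
      norm (f y - f w - frechet_derivative f (at w) (y - w)) \<le> e * norm (y - w)"
    by blast
  show ?thesis
  proof (rule that[OF \<open>d > 0\<close>])
    fix q :: complex assume "cmod q < d"
    then show "norm (f (w + q) - f w - frechet_derivative f (at w) q) \<le> e * cmod q"
      using d[rule_format, of "w + q"] by simp
  qed
qed

lemma mixed_sym:
  fixes \<phi> :: "complex \<Rightarrow> real"
  assumes \<Omega>: "open \<Omega>" "w \<in> \<Omega>" and d\<phi>: "\<phi> differentiable_on \<Omega>"
    and d1: "(\<lambda>x. frechet_derivative \<phi> (at x) 1) differentiable (at w)"
    and di: "(\<lambda>x. frechet_derivative \<phi> (at x) \<i>) differentiable (at w)"
  shows "frechet_derivative (\<lambda>x. frechet_derivative \<phi> (at x) 1) (at w) \<i> =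
         frechet_derivative (\<lambda>x. frechet_derivative \<phi> (at x) \<i>) (at w) 1"
proof -
  define p1 where "p1 = (\<lambda>x. frechet_derivative \<phi> (at x) 1)"
  define pi' where "pi' = (\<lambda>x. frechet_derivative \<phi> (at x) \<i>)"
  define B1 where "B1 = frechet_derivative p1 (at w)"
  define Bi where "Bi = frechet_derivative pi' (at w)"
  have linB1: "linear B1" unfolding B1_def p1_def by (rule fd_linear[OF d1])
  have linBi: "linear Bi" unfolding Bi_def pi'_def by (rule fd_linear[OF di])
  have main: "\<bar>B1 \<i> - Bi 1\<bar> \<le> 6 * e" if e: "e > 0" for e
  proof -
    obtain d1' where d1': "d1' > 0" "\<And>q. cmod q < d1' \<Longrightarrow> \<bar>p1 (w + q) - p1 w - B1 q\<bar> \<le> e * cmod q"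
      using deriv_alt_bound[OF d1 e] unfolding p1_def B1_def by auto
    obtain di' where di': "di' > 0" "\<And>q. cmod q < di' \<Longrightarrow> \<bar>pi' (w + q) - pi' w - Bi q\<bar> \<le> e * cmod q"
      using deriv_alt_bound[OF di e] unfolding pi'_def Bi_def by auto
    obtain d3 where d3: "d3 > 0" "ball w d3 \<subseteq> \<Omega>"
      using \<Omega> openE by blast
    define t where "t = min (min d1' di') d3 / 4"
    have t: "t > 0" "2 * t < d1'" "2 * t < di'" "2 * t < d3"
      using d1' di' d3 unfolding t_def by auto
    have dif: "\<phi> differentiable (at z)" if "cmod (z - w) < d3" for z
      using diff_on_open_at[OF d\<phi> \<Omega>(1)] d3 that by (auto simp: dist_norm norm_minus_commute)
    define \<Delta> where "\<Delta> = \<phi> (w + of_real t + \<i> * of_real t) - \<phi> (w + of_real t) - \<phi> (w + \<i> * of_real t) + \<phi> w"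
    define G where "G x = \<phi> (w + \<i> * of_real t + of_real x * 1) - \<phi> (w + 0 + of_real x * 1)" for x
    have G': "DERIV G x :> (p1 (w + \<i> * of_real t + of_real x * 1) - p1 (w + 0 + of_real x * 1))"
      if "0 \<le> x" "x \<le> t" for x
    proof -
      have n1: "cmod (w + \<i> * of_real t + of_real x * 1 - w) < d3"
        using that t norm_triangle_ineq[of "\<i> * of_real t" "of_real x"] by (simp add: norm_mult)
      have n2: "cmod (w + 0 + of_real x * 1 - w) < d3" using that t by simp
      show ?thesis unfolding G_def p1_def
        by (intro derivative_intros dir_deriv dif n1 n2)
    qed
    obtain \<xi> where \<xi>: "0 < \<xi>" "\<xi> < t" "G t - G 0 = (t - 0) * (p1 (w + \<i> * of_real t + of_real \<xi> * 1) - p1 (w + 0 + of_real \<xi> * 1))"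
      using MVT2[OF t(1), of G, OF G'] by auto
    have GD: "G t - G 0 = \<Delta>" unfolding G_def \<Delta>_def by (simp add: algebra_simps)
    have est1: "\<bar>\<Delta> - t * t * B1 \<i>\<bar> \<le> 3 * e * t * t"
    proof -
      define q1 where "q1 = \<i> * of_real t + of_real \<xi>"
      define q2 where "q2 = (of_real \<xi> :: complex)"
      have nq1: "cmod q1 \<le> 2 * t" unfolding q1_def
        using norm_triangle_ineq[of "\<i> * of_real t" "of_real \<xi>"] \<xi> t by (simp add: norm_mult)
      have nq2: "cmod q2 \<le> t" unfolding q2_def using \<xi> by simp
      have a1: "\<bar>p1 (w + q1) - p1 w - B1 q1\<bar> \<le> e * cmod q1" using d1'(2) nq1 t by auto
      have a2: "\<bar>p1 (w + q2) - p1 w - B1 q2\<bar> \<le> e * cmod q2" using d1'(2) nq2 t by auto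
      have lin: "B1 q1 - B1 q2 = t * B1 \<i>"
        using lin_decomp[OF linB1, of q1] lin_decomp[OF linB1, of q2] unfolding q1_def q2_def by simp
      have "\<Delta> = t * (p1 (w + q1) - p1 (w + q2))"
        using \<xi>(3) GD unfolding q1_def q2_def by (simp add: add.assoc)
      then have "\<Delta> - t * t * B1 \<i> = t * ((p1 (w + q1) - p1 w - B1 q1) - (p1 (w + q2) - p1 w - B1 q2))"
        using lin by (simp add: algebra_simps)
      then have "\<bar>\<Delta> - t * t * B1 \<i>\<bar> \<le> t * (e * cmod q1 + e * cmod q2)"
        using a1 a2 t(1) by (simp add: abs_mult mult_left_mono abs_triangle_ineq4 order_trans[OF abs_triangle_ineq4])
      also have "\<dots> \<le> t * (e * (2*t) + e * t)"
        using nq1 nq2 e t(1) by (intro mult_left_mono add_mono) auto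
      finally show ?thesis by (simp add: algebra_simps)
    qed
    define H where "H y = \<phi> (w + of_real t + of_real y * \<i>) - \<phi> (w + 0 + of_real y * \<i>)" for y
    have H': "DERIV H y :> (pi' (w + of_real t + of_real y * \<i>) - pi' (w + 0 + of_real y * \<i>))"
      if "0 \<le> y" "y \<le> t" for y
    proof -
      have n1: "cmod (w + of_real t + of_real y * \<i> - w) < d3"
        using that t norm_triangle_ineq[of "of_real t" "of_real y * \<i>"] by (simp add: norm_mult)
      have n2: "cmod (w + 0 + of_real y * \<i> - w) < d3" using that t by (simp add: norm_mult)
      show ?thesis unfolding H_def pi'_def
        by (intro derivative_intros dir_deriv dif n1 n2)
    qed
    obtain \<eta> where \<eta>: "0 < \<eta>" "\<eta> < t" "H t - H 0 = (t - 0) * (pi' (w + of_real t + of_real \<eta> * \<i>) - pi' (w + 0 + of_real \<eta> * \<i>))"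
      using MVT2[OF t(1), of H, OF H'] by auto
    have HD: "H t - H 0 = \<Delta>" unfolding H_def \<Delta>_def by (simp add: algebra_simps)
    have est2: "\<bar>\<Delta> - t * t * Bi 1\<bar> \<le> 3 * e * t * t"
    proof -
      define q1 where "q1 = of_real t + of_real \<eta> * \<i>"
      define q2 where "q2 = of_real \<eta> * \<i>"
      have nq1: "cmod q1 \<le> 2 * t" unfolding q1_def
        using norm_triangle_ineq[of "of_real t" "of_real \<eta> * \<i>"] \<eta> t by (simp add: norm_mult)
      have nq2: "cmod q2 \<le> t" unfolding q2_def using \<eta> by (simp add: norm_mult)
      have a1: "\<bar>pi' (w + q1) - pi' w - Bi q1\<bar> \<le> e * cmod q1" using di'(2) nq1 t by auto
      have a2: "\<bar>pi' (w + q2) - pi' w - Bi q2\<bar> \<le> e * cmod q2" using di'(2) nq2 t by auto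
      have lin: "Bi q1 - Bi q2 = t * Bi 1"
        using lin_decomp[OF linBi, of q1] lin_decomp[OF linBi, of q2] unfolding q1_def q2_def by simp
      have "\<Delta> = t * (pi' (w + q1) - pi' (w + q2))"
        using \<eta>(3) HD unfolding q1_def q2_def by (simp add: add.assoc)
      then have "\<Delta> - t * t * Bi 1 = t * ((pi' (w + q1) - pi' w - Bi q1) - (pi' (w + q2) - pi' w - Bi q2))"
        using lin by (simp add: algebra_simps)
      then have "\<bar>\<Delta> - t * t * Bi 1\<bar> \<le> t * (e * cmod q1 + e * cmod q2)"
        using a1 a2 t(1) by (simp add: abs_mult mult_left_mono order_trans[OF abs_triangle_ineq4])
      also have "\<dots> \<le> t * (e * (2*t) + e * t)"
        using nq1 nq2 e t(1) by (intro mult_left_mono add_mono) auto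
      finally show ?thesis by (simp add: algebra_simps)
    qed
    have "t * t * \<bar>B1 \<i> - Bi 1\<bar> = \<bar>(\<Delta> - t * t * Bi 1) - (\<Delta> - t * t * B1 \<i>)\<bar>"
    proof -
      have "(\<Delta> - t * t * Bi 1) - (\<Delta> - t * t * B1 \<i>) = (t * t) * (B1 \<i> - Bi 1)"
        by (simp add: algebra_simps)
      then show ?thesis using t(1) by (simp add: abs_mult)
    qed
    also have "\<dots> \<le> 3 * e * t * t + 3 * e * t * t"
      using est1 est2 abs_triangle_ineq4[of "\<Delta> - t * t * Bi 1" "\<Delta> - t * t * B1 \<i>"] by linarith
    finally have "t * t * \<bar>B1 \<i> - Bi 1\<bar> \<le> t * t * (6 * e)" by (simp add: algebra_simps)
    then show ?thesis using t(1) by (simp add: mult_le_cancel_left_pos)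
  qed
  have "B1 \<i> = Bi 1"
  proof (rule ccontr)
    assume "B1 \<i> \<noteq> Bi 1"
    then have "\<bar>B1 \<i> - Bi 1\<bar> > 0" by simp
    from main[of "\<bar>B1 \<i> - Bi 1\<bar> / 12"] this show False by simp
  qed
  then show ?thesis unfolding B1_def Bi_def p1_def pi'_def .
qed

lemma smooth_C2:
  assumes "smooth_on \<Omega> \<phi>"
  shows "\<phi> differentiable_on \<Omega>" "\<And>v. (\<lambda>x. frechet_derivative \<phi> (at x) v) differentiable_on \<Omega>"
proof -
  have "Ck_on (Suc (Suc 0)) \<Omega> \<phi>" using assms unfolding smooth_on_def by blast
  then show "\<phi> differentiable_on \<Omega>" "\<And>v. (\<lambda>x. frechet_derivative \<phi> (at x) v) differentiable_on \<Omega>"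
    by auto
qed

lemma harm_factor:
  fixes \<phi> :: "complex \<Rightarrow> real"
  assumes \<Omega>: "open \<Omega>" "ball a R \<subseteq> \<Omega>" "R > 0"
    and sm: "smooth_on \<Omega> \<phi>" and harm: "harmonic_on \<Omega> \<phi>"
  obtains F where "F holomorphic_on ball a R" "F a = 1" "\<And>z. F z \<noteq> 0"
    "\<And>z. z \<in> ball a R \<Longrightarrow> (cmod (F z))^2 * exp (- \<phi> z) = exp (- \<phi> a)"
proof -
  note d\<phi> = smooth_C2(1)[OF sm] and dp = smooth_C2(2)[OF sm]
  define p1 where "p1 = (\<lambda>x. frechet_derivative \<phi> (at x) 1)"
  define pi' where "pi' = (\<lambda>x. frechet_derivative \<phi> (at x) \<i>)"
  define g where "g w = complex_of_real (p1 w) - \<i> * complex_of_real (pi' w)" for w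
  have inO: "w \<in> \<Omega>" if "w \<in> ball a R" for w using that \<Omega> by auto
  have gder: "(g has_field_derivative (of_real (frechet_derivative p1 (at w) 1) - \<i> * of_real (frechet_derivative pi' (at w) 1))) (at w)"
    if w: "w \<in> \<Omega>" for w
  proof -
    have d1: "p1 differentiable (at w)" unfolding p1_def by (rule diff_on_open_at[OF dp \<Omega>(1) w])
    have di: "pi' differentiable (at w)" unfolding pi'_def by (rule diff_on_open_at[OF dp \<Omega>(1) w])
    define B1 where "B1 = frechet_derivative p1 (at w)"
    define Bi where "Bi = frechet_derivative pi' (at w)"
    have l1: "linear B1" unfolding B1_def by (rule fd_linear[OF d1])
    have li: "linear Bi" unfolding Bi_def by (rule fd_linear[OF di])
    have sym: "B1 \<i> = Bi 1" unfolding B1_def Bi_def p1_def pi'_def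
      by (rule mixed_sym[OF \<Omega>(1) w d\<phi>]) (use d1 di in \<open>simp_all add: p1_def pi'_def\<close>)
    have lap: "B1 1 + Bi \<i> = 0"
      using harm w unfolding harmonic_on_def laplacian_def B1_def Bi_def p1_def pi'_def by auto
    have "(g has_derivative (\<lambda>v. of_real (B1 v) - \<i> * of_real (Bi v))) (at w)"
      unfolding g_def B1_def Bi_def
      by (intro derivative_intros bounded_linear.has_derivative[OF bounded_linear_of_real] fd_works d1 di)
    moreover have "(\<lambda>v. of_real (B1 v) - \<i> * of_real (Bi v)) = (*) (of_real (B1 1) - \<i> * of_real (Bi 1))"
    proof
      fix v
      show "of_real (B1 v) - \<i> * of_real (Bi v) = (of_real (B1 1) - \<i> * of_real (Bi 1)) * v"
      proof -
        have lap': "Bi \<i> = - B1 1" using lap by simp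
        show ?thesis using lin_decomp[OF l1, of v] lin_decomp[OF li, of v] sym lap'
          by (simp add: complex_eq_iff algebra_simps)
      qed
    qed
    ultimately show ?thesis unfolding B1_def Bi_def by (simp add: has_field_derivative_def)
  qed
  have holg: "g holomorphic_on ball a R"
    unfolding holomorphic_on_open[OF open_ball]
  proof
    fix x assume "x \<in> ball a R"
    from gder[OF inO[OF this]] show "\<exists>f'. (g has_field_derivative f') (at x)" by (rule exI)
  qed
  obtain h where h: "\<And>x. x \<in> ball a R \<Longrightarrow> (h has_field_derivative g x) (at x within ball a R)"
    by (rule holomorphic_convex_primitive'[OF convex_ball open_ball holg]) blast
  have h': "(h has_field_derivative g x) (at x)" if "x \<in> ball a R" for x
  proof -
    have "at x within ball a R = at x" by (rule at_within_open[OF that open_ball])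
    with h[OF that] show ?thesis by simp
  qed
  have zero: "((\<lambda>z. Re (h z) - \<phi> z) has_derivative (\<lambda>v. 0)) (at x within ball a R)"
    if x: "x \<in> ball a R" for x
  proof -
    have dx: "\<phi> differentiable (at x)" by (rule diff_on_open_at[OF d\<phi> \<Omega>(1) inO[OF x]])
    let ?D = "frechet_derivative \<phi> (at x)"
    have lD: "linear ?D" by (rule fd_linear[OF dx])
    have "((\<lambda>z. Re (h z) - \<phi> z) has_derivative (\<lambda>v. Re (g x * v) - ?D v)) (at x)"
      using h'[OF x] unfolding has_field_derivative_def
      by (intro derivative_intros fd_works dx) auto
    moreover have "(\<lambda>v. Re (g x * v) - ?D v) = (\<lambda>v. 0)"
    proof
      fix v show "Re (g x * v) - ?D v = 0"
        using lin_decomp[OF lD, of v] unfolding g_def p1_def pi'_def by (simp add: algebra_simps)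
    qed
    ultimately show ?thesis by (simp add: has_derivative_at_withinI)
  qed
  obtain c where c: "\<And>x. x \<in> ball a R \<Longrightarrow> Re (h x) - \<phi> x = c"
    using has_derivative_zero_constant[OF convex_ball zero] by blast
  define F where "F z = exp ((h z - h a) / 2)" for z
  have a_in: "a \<in> ball a R" using \<Omega>(3) by simp
  show ?thesis
  proof (rule that[of F])
    have hh: "h holomorphic_on ball a R"
      unfolding holomorphic_on_open[OF open_ball]
    proof
      fix x assume "x \<in> ball a R"
      from h'[OF this] show "\<exists>f'. (h has_field_derivative f') (at x)" by (rule exI)
    qed
    show "F holomorphic_on ball a R" unfolding F_def
      by (intro holomorphic_intros hh) simp
    show "F a = 1" by (simp add: F_def)
    show "F z \<noteq> 0" for z by (simp add: F_def)
    fix z assume z: "z \<in> ball a R"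
    have "(cmod (F z))^2 = exp (Re (h z) - Re (h a))"
      unfolding F_def norm_exp_eq_Re by (simp add: power2_eq_square exp_add[symmetric])
    also have "\<dots> = exp (\<phi> z - \<phi> a)" using c[OF z] c[OF a_in] by (simp add: algebra_simps)
    finally show "(cmod (F z))^2 * exp (- \<phi> z) = exp (- \<phi> a)"
      by (simp add: exp_add[symmetric])
  qed
qed

lemma taylor2:
  fixes \<phi> :: "complex \<Rightarrow> real"
  assumes \<Omega>: "open \<Omega>" "a \<in> \<Omega>" and d\<phi>: "\<phi> differentiable_on \<Omega>"
    and d1: "(\<lambda>x. frechet_derivative \<phi> (at x) 1) differentiable (at a)"
    and di: "(\<lambda>x. frechet_derivative \<phi> (at x) \<i>) differentiable (at a)"
    and e: "e > 0"
  obtains d where "d > 0" "ball a d \<subseteq> \<Omega>"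
    "\<And>h. cmod h < d \<Longrightarrow>
      \<bar>\<phi> (a + h) - \<phi> a - (Re h * frechet_derivative \<phi> (at a) 1 + Im h * frechet_derivative \<phi> (at a) \<i>)
        - (Re h * frechet_derivative (\<lambda>x. frechet_derivative \<phi> (at x) 1) (at a) h +
           Im h * frechet_derivative (\<lambda>x. frechet_derivative \<phi> (at x) \<i>) (at a) h) / 2\<bar>
      \<le> e * (cmod h)^2"
proof -
  define p1 where "p1 = (\<lambda>x. frechet_derivative \<phi> (at x) 1)"
  define pi' where "pi' = (\<lambda>x. frechet_derivative \<phi> (at x) \<i>)"
  define A1 where "A1 = frechet_derivative p1 (at a)"
  define Ai where "Ai = frechet_derivative pi' (at a)"
  have l1: "linear A1" unfolding A1_def p1_def by (rule fd_linear[OF d1])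
  have li: "linear Ai" unfolding Ai_def pi'_def by (rule fd_linear[OF di])
  have e2: "e / 2 > 0" using e by simp
  obtain d1' where d1': "d1' > 0" "\<And>q. cmod q < d1' \<Longrightarrow> \<bar>p1 (a + q) - p1 a - A1 q\<bar> \<le> e / 2 * cmod q"
    using deriv_alt_bound[OF d1 e2] unfolding p1_def A1_def by auto
  obtain di' where di': "di' > 0" "\<And>q. cmod q < di' \<Longrightarrow> \<bar>pi' (a + q) - pi' a - Ai q\<bar> \<le> e / 2 * cmod q"
    using deriv_alt_bound[OF di e2] unfolding pi'_def Ai_def by auto
  obtain d3 where d3: "d3 > 0" "ball a d3 \<subseteq> \<Omega>"
    using \<Omega> openE by blast
  define d where "d = min (min d1' di') d3"
  have d: "d > 0" "d \<le> d1'" "d \<le> di'" "d \<le> d3" using d1' di' d3 unfolding d_def by auto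
  show ?thesis
  proof (rule that[of d])
    show "d > 0" by fact
    show "ball a d \<subseteq> \<Omega>" using d d3 by auto
    fix h :: complex assume h: "cmod h < d"
    define L where "L = Re h * p1 a + Im h * pi' a"
    define Q where "Q = Re h * A1 h + Im h * Ai h"
    define k where "k t = \<phi> (a + of_real t * h) - t * L - t^2 / 2 * Q" for t :: real
    have inb: "cmod (of_real t * h) < d" if "0 \<le> t" "t \<le> 1" for t
    proof -
      have "cmod (of_real t * h) = t * cmod h" using that by (simp add: norm_mult)
      also have "\<dots> \<le> cmod h" using that by (simp add: mult_left_le_one_le)
      finally show ?thesis using h by simp
    qed
    have dif: "\<phi> differentiable (at (a + of_real t * h))" if "0 \<le> t" "t \<le> 1" for t
    proof -
      have "a + of_real t * h \<in> ball a d3" using inb[OF that] d by (simp add: dist_norm)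
      then show ?thesis using diff_on_open_at[OF d\<phi> \<Omega>(1)] d3 by blast
    qed
    have kder: "DERIV k t :> (frechet_derivative \<phi> (at (a + of_real t * h)) h - L - t * Q)"
      if "0 \<le> t" "t \<le> 1" for t
    proof -
      have k2: "DERIV (\<lambda>t. t * L) t :> L" by (auto intro!: derivative_eq_intros)
      have k3: "DERIV (\<lambda>t. t^2 / 2 * Q) t :> t * Q"
        by (auto intro!: derivative_eq_intros simp: power2_eq_square)
      show ?thesis unfolding k_def
        by (intro DERIV_diff dir_deriv[OF dif[OF that]] k2 k3)
    qed
    obtain \<xi> where \<xi>: "0 < \<xi>" "\<xi> < 1" "k 1 - k 0 = (1 - 0) * (frechet_derivative \<phi> (at (a + of_real \<xi> * h)) h - L - \<xi> * Q)"
      using MVT2[of 0 1 k, OF _ kder] by auto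
    define q where "q = of_real \<xi> * h"
    have nq: "cmod q \<le> cmod h" and nq': "cmod q < d" using inb[of \<xi>] \<xi> unfolding q_def by (auto simp: norm_mult mult_left_le_one_le)
    have lD: "linear (frechet_derivative \<phi> (at (a + q)))" unfolding q_def by (rule fd_linear[OF dif]) (use \<xi> in auto)
    have "frechet_derivative \<phi> (at (a + q)) h - L - \<xi> * Q =
          Re h * (p1 (a + q) - p1 a - A1 q) + Im h * (pi' (a + q) - pi' a - Ai q)"
    proof -
      have "A1 q = \<xi> * A1 h" "Ai q = \<xi> * Ai h"
        unfolding q_def using l1 li by (simp_all add: linear_scale scaleR_conv_of_real[symmetric])
      then show ?thesis
        using lin_decomp[OF lD, of h] unfolding L_def Q_def p1_def pi'_def by (simp add: algebra_simps)
    qed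
    then have "\<bar>k 1 - k 0\<bar> = \<bar>Re h * (p1 (a + q) - p1 a - A1 q) + Im h * (pi' (a + q) - pi' a - Ai q)\<bar>"
      using \<xi>(3) unfolding q_def by simp
    also have "\<dots> \<le> \<bar>Re h\<bar> * \<bar>p1 (a + q) - p1 a - A1 q\<bar> + \<bar>Im h\<bar> * \<bar>pi' (a + q) - pi' a - Ai q\<bar>"
      by (simp add: abs_mult order_trans[OF abs_triangle_ineq])
    also have "\<dots> \<le> cmod h * (e / 2 * cmod h) + cmod h * (e / 2 * cmod h)"
    proof (intro add_mono mult_mono)
      show "\<bar>p1 (a + q) - p1 a - A1 q\<bar> \<le> e / 2 * cmod h"
        using d1'(2)[of q] nq nq' d e by (auto intro: order_trans mult_left_mono)
      show "\<bar>pi' (a + q) - pi' a - Ai q\<bar> \<le> e / 2 * cmod h"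
        using di'(2)[of q] nq nq' d e by (auto intro: order_trans mult_left_mono)
    qed (auto simp: abs_Re_le_cmod abs_Im_le_cmod)
    also have "\<dots> = e * (cmod h)^2" by (simp add: power2_eq_square algebra_simps)
    finally have "\<bar>k 1 - k 0\<bar> \<le> e * (cmod h)^2" .
    moreover have "k 1 - k 0 = \<phi> (a + h) - \<phi> a - L - Q / 2" by (simp add: k_def)
    ultimately show "\<bar>\<phi> (a + h) - \<phi> a - (Re h * frechet_derivative \<phi> (at a) 1 + Im h * frechet_derivative \<phi> (at a) \<i>)
        - (Re h * frechet_derivative (\<lambda>x. frechet_derivative \<phi> (at x) 1) (at a) h +
           Im h * frechet_derivative (\<lambda>x. frechet_derivative \<phi> (at x) \<i>) (at a) h) / 2\<bar>
      \<le> e * (cmod h)^2"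
      unfolding L_def Q_def p1_def pi'_def A1_def Ai_def by simp
  qed
qed

lemma weight_expansion:
  fixes \<phi> :: "complex \<Rightarrow> real"
  assumes \<Omega>: "open \<Omega>" "a \<in> \<Omega>" and sm: "smooth_on \<Omega> \<phi>"
    and c: "laplacian \<phi> a \<noteq> 0"
  obtains F R where "R > 0" "ball a R \<subseteq> \<Omega>" "F holomorphic_on UNIV" "F a = 1" "\<And>z. F z \<noteq> 0"
    "\<And>z. z \<in> ball a R \<Longrightarrow> \<exists>E. \<bar>E\<bar> \<le> \<bar>laplacian \<phi> a / 4\<bar> / 2 * (cmod (z - a))^2 \<and>
        (cmod (F z))^2 * exp (- \<phi> z) = exp (- \<phi> a) * exp (- (laplacian \<phi> a / 4) * (cmod (z - a))^2 - E)"
proof -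
  note d\<phi> = smooth_C2(1)[OF sm] and dp = smooth_C2(2)[OF sm]
  define cc where "cc = laplacian \<phi> a / 4"
  have e: "\<bar>cc\<bar> / 2 > 0" using c unfolding cc_def by simp
  define p1 where "p1 = (\<lambda>x. frechet_derivative \<phi> (at x) 1)"
  define pi' where "pi' = (\<lambda>x. frechet_derivative \<phi> (at x) \<i>)"
  have d1: "p1 differentiable (at a)" unfolding p1_def by (rule diff_on_open_at[OF dp \<Omega>(1,2)])
  have di: "pi' differentiable (at a)" unfolding pi'_def by (rule diff_on_open_at[OF dp \<Omega>(1,2)])
  define A1 where "A1 = frechet_derivative p1 (at a)"
  define Ai where "Ai = frechet_derivative pi' (at a)"
  have l1: "linear A1" unfolding A1_def by (rule fd_linear[OF d1])
  have li: "linear Ai" unfolding Ai_def by (rule fd_linear[OF di])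
  obtain R where R: "R > 0" "ball a R \<subseteq> \<Omega>"
    "\<And>h. cmod h < R \<Longrightarrow>
      \<bar>\<phi> (a + h) - \<phi> a - (Re h * frechet_derivative \<phi> (at a) 1 + Im h * frechet_derivative \<phi> (at a) \<i>)
        - (Re h * frechet_derivative (\<lambda>x. frechet_derivative \<phi> (at x) 1) (at a) h +
           Im h * frechet_derivative (\<lambda>x. frechet_derivative \<phi> (at x) \<i>) (at a) h) / 2\<bar>
      \<le> \<bar>cc\<bar> / 2 * (cmod h)^2"
    by (rule taylor2[OF \<Omega> d\<phi> d1[unfolded p1_def] di[unfolded pi'_def] e]) blast
  define AA where "AA = A1 1"
  define CC where "CC = Ai \<i>"
  define MM where "MM = A1 \<i> + Ai 1"
  have lap: "laplacian \<phi> a = AA + CC"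
    unfolding laplacian_def AA_def CC_def A1_def Ai_def p1_def pi'_def by simp
  define \<alpha> where "\<alpha> = (complex_of_real (p1 a) - \<i> * complex_of_real (pi' a)) / 2"
  define \<beta> where "\<beta> = complex_of_real ((AA - CC) / 4) - \<i> * complex_of_real (MM / 4)"
  define F where "F z = exp (\<alpha> * (z - a) + \<beta> * (z - a)^2 / 2)" for z
  show ?thesis
  proof (rule that[of R F])
    show "R > 0" "ball a R \<subseteq> \<Omega>" by (fact R(1), fact R(2))
    show "F holomorphic_on UNIV" unfolding F_def by (intro holomorphic_intros) simp
    show "F a = 1" by (simp add: F_def)
    show "F z \<noteq> 0" for z by (simp add: F_def)
    fix z assume z: "z \<in> ball a R"
    define h where "h = z - a"
    have hR: "cmod h < R" using z unfolding h_def by (simp add: dist_norm norm_minus_commute)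
    define L where "L = Re h * p1 a + Im h * pi' a"
    define Q where "Q = Re h * A1 h + Im h * Ai h"
    define E where "E = \<phi> (a + h) - \<phi> a - L - Q / 2"
    have Eb: "\<bar>E\<bar> \<le> \<bar>cc\<bar> / 2 * (cmod h)^2" using R(3)[OF hR] unfolding E_def L_def Q_def p1_def pi'_def A1_def Ai_def .
    have Qeq: "Q = AA * (Re h)^2 + MM * Re h * Im h + CC * (Im h)^2"
      unfolding Q_def AA_def CC_def MM_def
      using lin_decomp[OF l1, of h] lin_decomp[OF li, of h] by (simp add: power2_eq_square algebra_simps)
    have re: "2 * Re (\<alpha> * h + \<beta> * h^2 / 2) = L + Q / 2 - cc * (cmod h)^2"
      unfolding L_def Qeq cc_def lap \<alpha>_def \<beta>_def cmod_power2
      by (simp add: power2_eq_square field_simps)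
    have "(cmod (F z))^2 = exp (L + Q / 2 - cc * (cmod h)^2)"
    proof -
      have ex: "(exp (Re w))^2 = exp (2 * Re w)" for w :: complex
      proof -
        have "exp (2 * Re w) = exp (Re w + Re w)" by (simp only: mult_2)
        also have "\<dots> = exp (Re w) * exp (Re w)" by (rule exp_add)
        finally show ?thesis by (simp only: power2_eq_square)
      qed
      show ?thesis unfolding F_def norm_exp_eq_Re h_def[symmetric] ex re ..
    qed
    moreover have "\<phi> z = \<phi> a + L + Q / 2 + E" unfolding E_def h_def by simp
    ultimately have "(cmod (F z))^2 * exp (- \<phi> z) =
        exp ((L + Q / 2 - cc * (cmod h)^2) + (- (\<phi> a + L + Q / 2 + E)))"
      by (simp only: exp_add)
    also have "\<dots> = exp (- \<phi> a + (- cc * (cmod h)^2 - E))"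
      by (rule arg_cong[where f=exp]) (simp add: algebra_simps)
    also have "\<dots> = exp (- \<phi> a) * exp (- cc * (cmod h)^2 - E)" by (rule exp_add)
    finally have "(cmod (F z))^2 * exp (- \<phi> z) = exp (- \<phi> a) * exp (- cc * (cmod h)^2 - E)" .
    then show "\<exists>E. \<bar>E\<bar> \<le> \<bar>laplacian \<phi> a / 4\<bar> / 2 * (cmod (z - a))^2 \<and>
        (cmod (F z))^2 * exp (- \<phi> z) = exp (- \<phi> a) * exp (- (laplacian \<phi> a / 4) * (cmod (z - a))^2 - E)"
      using Eb unfolding cc_def h_def by auto
  qed
qed

lemma le_at_left:
  fixes f :: "real \<Rightarrow> real"
  assumes "a < r" "\<And>s. a < s \<Longrightarrow> s < r \<Longrightarrow> f s \<le> y" "(f \<longlongrightarrow> L) (at_left r)"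
  shows "L \<le> y"
proof (rule tendsto_le[OF trivial_limit_at_left_real tendsto_const assms(3)])
  show "\<forall>\<^sub>F x in at_left r. f x \<le> y"
    using eventually_at_left_real[OF assms(1)] by eventually_elim (use assms(2) in auto)
qed

lemma ge_at_left:
  fixes f :: "real \<Rightarrow> real"
  assumes "a < r" "\<And>s. a < s \<Longrightarrow> s < r \<Longrightarrow> y \<le> f s" "(f \<longlongrightarrow> L) (at_left r)"
  shows "y \<le> L"
proof (rule tendsto_le[OF trivial_limit_at_left_real assms(3) tendsto_const])
  show "\<forall>\<^sub>F x in at_left r. y \<le> f x"
    using eventually_at_left_real[OF assms(1)] by eventually_elim (use assms(2) in auto)
qed

lemma cont_integral_zero:
  fixes f :: "complex \<Rightarrow> real"
  assumes cont: "continuous_on (cball a s) f" and nn: "\<And>z. z \<in> ball a s \<Longrightarrow> 0 \<le> f z"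
    and int0: "integral\<^sup>L lborel (\<lambda>z. indicator (ball a s) z * f z) = 0" and z0: "z0 \<in> ball a s"
  shows "f z0 = 0"
proof (rule ccontr)
  assume ne: "f z0 \<noteq> 0"
  then have pos: "f z0 > 0" using nn[OF z0] by simp
  have int: "integrable lborel (\<lambda>z. indicator (ball a s) z * f z)"
    using integrable_ball_cont[OF cont] by simp
  have "AE z in lborel. indicator (ball a s) z * f z = 0"
    using int0 integral_nonneg_eq_0_iff_AE[OF int] nn by (auto simp: indicator_def)
  then obtain N where N: "{z \<in> space lborel. \<not> indicator (ball a s) z * f z = 0} \<subseteq> N"
    "emeasure lborel N = 0" "N \<in> sets lborel"
    by (auto elim: AE_E)
  have z0c: "z0 \<in> cball a s" using z0 by auto
  obtain d where d: "d > 0" "\<And>x. x \<in> cball a s \<Longrightarrow> dist x z0 < d \<Longrightarrow> dist (f x) (f z0) < f z0"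
    using cont[unfolded continuous_on_iff] z0c pos by blast
  define e where "e = min d (s - dist a z0)"
  have e: "e > 0" using d z0 unfolding e_def by auto
  have sub: "ball z0 e \<subseteq> N"
  proof
    fix x assume x: "x \<in> ball z0 e"
    then have xb: "x \<in> ball a s" using dist_triangle[of a x z0] unfolding e_def by (auto simp: dist_commute)
    then have "dist (f x) (f z0) < f z0" using d(2)[of x] x unfolding e_def by (auto simp: dist_commute)
    then have "f x > 0" by (auto simp: dist_real_def)
    then show "x \<in> N" using N(1) xb by auto
  qed
  have "emeasure lborel (ball z0 e) \<le> emeasure lborel N"
    by (rule emeasure_mono[OF sub N(3)])
  then show False using N(2) emeasure_ball_complex[of e z0] e by simp
qed

lemma nn_sub_ball:
  fixes g :: "complex \<Rightarrow> real"
  assumes "continuous_on (cball a s) g" "\<And>z. z \<in> ball a r \<Longrightarrow> 0 \<le> g z" "s \<le> r"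
  shows "ennreal (integral\<^sup>L lborel (\<lambda>z. indicator (ball a s) z * g z)) \<le> (\<integral>\<^sup>+ z \<in> ball a r. ennreal (g z) \<partial>lborel)"
proof -
  have sub: "ball a s \<subseteq> ball a r" using assms(3) by auto
  have "ennreal (integral\<^sup>L lborel (\<lambda>z. indicator (ball a s) z * g z)) =
        (\<integral>\<^sup>+ z. ennreal (indicator (ball a s) z * g z) \<partial>lborel)"
    by (rule nn_integral_eq_integral[symmetric])
       (use integrable_ball_cont[OF assms(1)] in simp, use assms(2) sub in \<open>auto intro!: AE_I2 simp: indicator_def\<close>)
  also have "\<dots> \<le> (\<integral>\<^sup>+ z \<in> ball a r. ennreal (g z) \<partial>lborel)"
    by (intro nn_integral_mono) (use sub in \<open>auto simp: indicator_def\<close>)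
  finally show ?thesis .
qed

lemma J_mono:
  assumes hol: "k holomorphic_on ball a r" and "0 \<le> s" "s \<le> s'" "s' < r"
  shows "integral\<^sup>L lborel (\<lambda>z. indicator (ball a s) z * (cmod (k z - k a))^2) \<le>
         integral\<^sup>L lborel (\<lambda>z. indicator (ball a s') z * (cmod (k z - k a))^2)"
proof -
  have cont: "continuous_on (cball a s') k"
    using holomorphic_on_imp_continuous_on[OF hol] by (rule continuous_on_subset) (use assms in auto)
  have c2: "continuous_on (cball a s) k" by (rule continuous_on_subset[OF cont]) (use assms in auto)
  show ?thesis
  proof (rule integral_mono)
    have "continuous_on (cball a s) (\<lambda>z. (cmod (k z - k a))^2)" by (intro continuous_intros c2)
    from integrable_ball_cont[OF this]
    show "integrable lborel (\<lambda>z. indicator (ball a s) z * (cmod (k z - k a))^2)" by simp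
    have "continuous_on (cball a s') (\<lambda>z. (cmod (k z - k a))^2)" by (intro continuous_intros cont)
    from integrable_ball_cont[OF this]
    show "integrable lborel (\<lambda>z. indicator (ball a s') z * (cmod (k z - k a))^2)" by simp
    show "indicator (ball a s) z * (cmod (k z - k a))^2 \<le> indicator (ball a s') z * (cmod (k z - k a))^2" for z
      using assms by (auto simp: indicator_def)
  qed
qed

lemma hol_nn_lower:
  assumes hol: "k holomorphic_on ball a r" and r: "r > 0"
  shows "ennreal (pi * r^2 * (cmod (k a))^2) \<le> (\<integral>\<^sup>+ z \<in> ball a r. ennreal ((cmod (k z))^2) \<partial>lborel)"
    (is "_ \<le> ?X")
proof (cases ?X)
  case (real x)
  have b: "pi * s^2 * (cmod (k a))^2 \<le> x" if s: "0 < s" "s < r" for s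
  proof -
    have cont: "continuous_on (cball a s) k"
      using holomorphic_on_imp_continuous_on[OF hol] by (rule continuous_on_subset) (use s in auto)
    have J: "0 \<le> integral\<^sup>L lborel (\<lambda>z. indicator (ball a s) z * (cmod (k z - k a))^2)"
      by (rule Bochner_Integration.integral_nonneg) (auto simp: indicator_def)
    have "ennreal (integral\<^sup>L lborel (\<lambda>z. indicator (ball a s) z * (cmod (k z))^2)) \<le> ?X"
      by (rule nn_sub_ball) (use cont s in \<open>auto intro!: continuous_intros\<close>)
    then have "integral\<^sup>L lborel (\<lambda>z. indicator (ball a s) z * (cmod (k z))^2) \<le> x"
      using real by (simp add: ennreal_le_iff)
    then show ?thesis using pythag_ball[OF hol less_imp_le[OF s(1)] s(2)] J by linarith
  qed
  have "pi * r^2 * (cmod (k a))^2 \<le> x"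
    by (rule le_at_left[of 0 r, OF r b]) (auto intro!: tendsto_eq_intros)
  then show ?thesis using real by (simp add: ennreal_le_iff)
qed simp

lemma hol_nn_rigid:
  assumes hol: "k holomorphic_on ball a r" and r: "r > 0"
    and le: "(\<integral>\<^sup>+ z \<in> ball a r. ennreal ((cmod (k z))^2) \<partial>lborel) \<le> ennreal (pi * r^2 * (cmod (k a))^2)"
  shows "\<And>z. z \<in> ball a r \<Longrightarrow> k z = k a"
proof -
  define C where "C = (cmod (k a))^2"
  define J where "J s = integral\<^sup>L lborel (\<lambda>z. indicator (ball a s) z * (cmod (k z - k a))^2)" for s
  have Jb: "J s \<le> pi * (r^2 - s^2) * C" if s: "0 \<le> s" "s < r" for s
  proof -
    have cont: "continuous_on (cball a s) k"
      using holomorphic_on_imp_continuous_on[OF hol] by (rule continuous_on_subset) (use s in auto)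
    have "ennreal (integral\<^sup>L lborel (\<lambda>z. indicator (ball a s) z * (cmod (k z))^2)) \<le> ennreal (pi * r^2 * C)"
      by (rule order_trans[OF nn_sub_ball le[folded C_def]]) (use cont s in \<open>auto intro!: continuous_intros\<close>)
    then have "integral\<^sup>L lborel (\<lambda>z. indicator (ball a s) z * (cmod (k z))^2) \<le> pi * r^2 * C"
      by (simp add: ennreal_le_iff C_def)
    then show ?thesis using pythag_ball[OF hol s] unfolding J_def C_def by (simp add: algebra_simps)
  qed
  have J0: "J s = 0" if s: "0 \<le> s" "s < r" for s
  proof -
    have "J s \<le> 0"
    proof (rule ge_at_left[of s r, OF s(2)])
      fix s' assume "s < s'" "s' < r"
      then show "J s \<le> pi * (r^2 - s'^2) * C"
        using J_mono[OF hol s(1), of s'] Jb[of s'] s unfolding J_def by auto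
    next
      show "((\<lambda>s'. pi * (r^2 - s'^2) * C) \<longlongrightarrow> 0) (at_left r)"
        by (auto intro!: tendsto_eq_intros)
    qed
    moreover have "J s \<ge> 0" unfolding J_def by (rule Bochner_Integration.integral_nonneg) (auto simp: indicator_def)
    ultimately show ?thesis by simp
  qed
  fix z assume z: "z \<in> ball a r"
  define s where "s = (dist a z + r) / 2"
  have "0 \<le> dist a z" by simp
  then have s: "0 \<le> s" "s < r" "z \<in> ball a s" using z r unfolding s_def by auto
  have cont: "continuous_on (cball a s) k"
    using holomorphic_on_imp_continuous_on[OF hol] by (rule continuous_on_subset) (use s in auto)
  have "(cmod (k z - k a))^2 = 0"
    by (rule cont_integral_zero[of a s _ z]) (use J0[OF s(1,2)] cont s in \<open>auto simp: J_def intro!: continuous_intros\<close>)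
  then show "k z = k a" by simp
qed

lemma integral_strict_less:
  fixes W :: "complex \<Rightarrow> real"
  assumes cont: "continuous_on (cball a r) W" and r: "r > 0"
    and le: "\<And>z. z \<in> ball a r \<Longrightarrow> W z \<le> 1" and z0: "z0 \<in> ball a r" "W z0 < 1"
  shows "integral\<^sup>L lborel (\<lambda>z. indicator (ball a r) z * W z) < pi * r^2"
proof -
  have i1: "integrable lborel (\<lambda>z. indicator (ball a r) z * W z)"
    using integrable_ball_cont[OF cont] by simp
  have i2: "integrable lborel (\<lambda>z. indicator (ball a r) z * (1::real))"
    using integrable_ball_cont[of a r "\<lambda>_. 1::real"] by simp
  have "integral\<^sup>L lborel (\<lambda>z. indicator (ball a r) z * (1 - W z)) \<noteq> 0"
  proof
    assume "integral\<^sup>L lborel (\<lambda>z. indicator (ball a r) z * (1 - W z)) = 0"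
    then have "1 - W z0 = 0"
      by (intro cont_integral_zero[of a r "\<lambda>z. 1 - W z" z0]) (use cont le z0 in \<open>auto intro!: continuous_intros\<close>)
    then show False using z0 by simp
  qed
  moreover have "integral\<^sup>L lborel (\<lambda>z. indicator (ball a r) z * (1 - W z)) \<ge> 0"
    by (rule Bochner_Integration.integral_nonneg) (use le in \<open>auto simp: indicator_def\<close>)
  moreover have "integral\<^sup>L lborel (\<lambda>z. indicator (ball a r) z * (1 - W z)) =
      integral\<^sup>L lborel (\<lambda>z. indicator (ball a r) z * (1::real)) - integral\<^sup>L lborel (\<lambda>z. indicator (ball a r) z * W z)"
    by (subst Bochner_Integration.integral_diff[symmetric, OF i2 i1]) (simp add: algebra_simps)
  moreover have "integral\<^sup>L lborel (\<lambda>z. indicator (ball a r) z * (1::real)) = pi * r^2"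
    using integral_ball_const[of r a "1::real"] r by simp
  ultimately show ?thesis by linarith
qed

lemma weighted_lower:
  fixes W :: "complex \<Rightarrow> real"
  assumes hol: "k holomorphic_on ball a r" and r: "r > 0" and ka: "k a = 1" and eta: "\<eta> \<ge> 0"
    and W1: "\<And>z. z \<in> ball a r \<Longrightarrow> 1 \<le> W z"
    and W2: "\<And>z. z \<in> ball a r \<Longrightarrow> r / 2 \<le> cmod (z - a) \<Longrightarrow> 1 + \<eta> \<le> W z"
  shows "ennreal (pi * r^2 * (1 + 3 * \<eta> / 4)) \<le> (\<integral>\<^sup>+ z \<in> ball a r. ennreal (W z * (cmod (k z))^2) \<partial>lborel)"
    (is "_ \<le> ?X")
proof (cases ?X)
  case (real x)
  define I where "I \<rho> = integral\<^sup>L lborel (\<lambda>z. indicator (ball a \<rho>) z * (cmod (k z))^2)" for \<rho>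
  define J where "J \<rho> = integral\<^sup>L lborel (\<lambda>z. indicator (ball a \<rho>) z * (cmod (k z - k a))^2)" for \<rho>
  have b: "(1 + \<eta>) * (pi * s^2) - \<eta> * (pi * (r/2)^2) \<le> x" if s: "r / 2 < s" "s < r" for s
  proof -
    have s0: "0 \<le> s" "0 \<le> r / 2" "r / 2 \<le> s" using s r by auto
    have cont: "continuous_on (cball a s) k"
      using holomorphic_on_imp_continuous_on[OF hol] by (rule continuous_on_subset) (use s in auto)
    have cont2: "continuous_on (cball a (r/2)) k" by (rule continuous_on_subset[OF cont]) (use s in auto)
    have i1: "integrable lborel (\<lambda>z. indicator (ball a s) z * (cmod (k z))^2)"
      using integrable_ball_cont[of a s "\<lambda>z. (cmod (k z))^2"] cont by (simp add: continuous_intros)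
    have i2: "integrable lborel (\<lambda>z. indicator (ball a (r/2)) z * (cmod (k z))^2)"
      using integrable_ball_cont[of a "r/2" "\<lambda>z. (cmod (k z))^2"] cont2 by (simp add: continuous_intros)
    define G where "G z = (1 + \<eta>) * (indicator (ball a s) z * (cmod (k z))^2) - \<eta> * (indicator (ball a (r/2)) z * (cmod (k z))^2)" for z
    have Gnn: "0 \<le> G z" for z
      using eta s unfolding G_def by (auto simp: indicator_def algebra_simps)
    have iG: "integrable lborel G" unfolding G_def using i1 i2 by simp
    have intG: "integral\<^sup>L lborel G = (1 + \<eta>) * I s - \<eta> * I (r/2)"
      unfolding G_def I_def using i1 i2 by simp
    have "ennreal (integral\<^sup>L lborel G) = (\<integral>\<^sup>+ z. ennreal (G z) \<partial>lborel)"
      by (rule nn_integral_eq_integral[symmetric, OF iG]) (auto intro!: AE_I2 Gnn)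
    also have "\<dots> \<le> ?X"
    proof (rule nn_integral_mono)
      fix z
      show "ennreal (G z) \<le> ennreal (W z * (cmod (k z))^2) * indicator (ball a r) z"
      proof (cases "z \<in> ball a s")
        case False
        then have "z \<notin> ball a (r/2)" using s by auto
        with False show ?thesis unfolding G_def by simp
      next
        case True
        then have zr: "z \<in> ball a r" using s by auto
        show ?thesis
        proof (cases "z \<in> ball a (r/2)")
          case True
          have "(cmod (k z))^2 \<le> W z * (cmod (k z))^2"
            using W1[OF zr] by (simp add: mult_le_cancel_right1)
          then show ?thesis using True \<open>z \<in> ball a s\<close> zr unfolding G_def by (simp add: ennreal_leI algebra_simps)
        next
          case False
          then have "r / 2 \<le> cmod (z - a)" by (simp add: dist_norm norm_minus_commute)
          then have "(1 + \<eta>) * (cmod (k z))^2 \<le> W z * (cmod (k z))^2"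
            using W2[OF zr] by (simp add: mult_right_mono)
          then show ?thesis using False \<open>z \<in> ball a s\<close> zr unfolding G_def by (simp add: ennreal_leI)
        qed
      qed
    qed
    finally have "integral\<^sup>L lborel G \<le> x" using real by (simp add: ennreal_le_iff)
    moreover have "I s = pi * s^2 + J s" "I (r/2) = pi * (r/2)^2 + J (r/2)"
      using pythag_ball[OF hol s0(1) s(2)] pythag_ball[OF hol s0(2)] s r ka unfolding I_def J_def by auto
    moreover have "J (r/2) \<le> J s" unfolding J_def by (rule J_mono[OF hol s0(2,3) s(2)])
    moreover have "J (r/2) \<ge> 0" unfolding J_def by (rule Bochner_Integration.integral_nonneg) (auto simp: indicator_def)
    ultimately show ?thesis using intG eta mult_nonneg_nonneg[OF eta, of "J s - J (r/2)"]
      by (simp add: algebra_simps)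
  qed
  have "(1 + \<eta>) * (pi * r^2) - \<eta> * (pi * (r/2)^2) \<le> x"
    by (rule le_at_left[of "r/2" r, OF _ b]) (use r in \<open>auto intro!: tendsto_eq_intros\<close>)
  moreover have "(1 + \<eta>) * (pi * r^2) - \<eta> * (pi * (r/2)^2) = pi * r^2 * (1 + 3 * \<eta> / 4)"
    by (simp add: power2_eq_square field_simps)
  ultimately show ?thesis using real by (simp add: ennreal_le_iff)
qed simp

lemma delta_ball:
  assumes "(a, r) \<in> Omega_delta \<Omega>"
  obtains R where "a \<in> \<Omega>" "0 < r" "r < R" "ball a R \<subseteq> \<Omega>"
proof -
  have a: "a \<in> \<Omega>" "0 < r" and lt: "ereal r < bdist \<Omega> a"
    using assms unfolding Omega_delta_def by auto
  from lt obtain R where "R \<in> {r. r > 0 \<and> ball a r \<subseteq> \<Omega>}" "ereal r < ereal R"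
    unfolding bdist_def less_SUP_iff by blast
  then show ?thesis using that a by auto
qed

lemma ball_delta:
  assumes "a \<in> \<Omega>" "0 < r" "r < R" "ball a R \<subseteq> \<Omega>"
  shows "(a, r) \<in> Omega_delta \<Omega>"
proof -
  have "R \<in> {r. r > 0 \<and> ball a r \<subseteq> \<Omega>}" using assms by auto
  then have "ereal R \<le> bdist \<Omega> a" unfolding bdist_def by (rule SUP_upper)
  moreover have "ereal r < ereal R" using assms(3) by simp
  ultimately have "ereal r < bdist \<Omega> a" by (rule_tac less_le_trans[of _ "ereal R"]) auto
  then show ?thesis using assms unfolding Omega_delta_def by auto
qed

lemma meas_ball_cont:
  fixes h :: "complex \<Rightarrow> real"
  assumes "continuous_on (ball a r) h"
  shows "(\<lambda>z. ennreal (h z) * indicator (ball a r) z) \<in> borel_measurable lborel"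
proof -
  have "(\<lambda>z. indicator (ball a r) z *\<^sub>R h z) \<in> borel_measurable borel"
    by (rule borel_measurable_continuous_on_indicator) (simp_all add: assms)
  then have "(\<lambda>z. ennreal (indicator (ball a r) z *\<^sub>R h z)) \<in> borel_measurable borel"
    by measurable
  moreover have "(\<lambda>z. ennreal (indicator (ball a r) z *\<^sub>R h z)) = (\<lambda>z. ennreal (h z) * indicator (ball a r) z)"
    by (auto simp: indicator_def)
  ultimately show ?thesis by simp
qed

lemma set_int_nn:
  fixes g :: "complex \<Rightarrow> real"
  assumes "set_integrable lborel A g" "\<And>z. 0 \<le> g z"
  shows "ennreal (set_lebesgue_integral lborel A g) = (\<integral>\<^sup>+ z \<in> A. ennreal (g z) \<partial>lborel)"
proof -
  have "ennreal (set_lebesgue_integral lborel A g) = (\<integral>\<^sup>+ z. ennreal (indicator A z *\<^sub>R g z) \<partial>lborel)"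
    unfolding set_lebesgue_integral_def
    by (rule nn_integral_eq_integral[symmetric]) (use assms in \<open>auto simp: set_integrable_def intro!: AE_I2\<close>)
  also have "\<dots> = (\<integral>\<^sup>+ z \<in> A. ennreal (g z) \<partial>lborel)"
    by (intro nn_integral_cong) (auto simp: indicator_def)
  finally show ?thesis .
qed

lemma nn_factor:
  fixes \<phi> W :: "complex \<Rightarrow> real"
  assumes holF: "F holomorphic_on ball a r" and F0: "\<And>z. z \<in> ball a r \<Longrightarrow> F z \<noteq> 0"
    and contW: "continuous_on (ball a r) W"
    and FW: "\<And>z. z \<in> ball a r \<Longrightarrow> (cmod (F z))^2 * exp (- \<phi> z) = exp (- \<phi> a) * W z"
    and holg: "g holomorphic_on ball a r"
  shows "(\<integral>\<^sup>+ z \<in> ball a r. ennreal ((cmod (g z))^2 * exp (- \<phi> z)) \<partial>lborel) =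
         ennreal (exp (- \<phi> a)) * (\<integral>\<^sup>+ z \<in> ball a r. ennreal (W z * (cmod (g z / F z))^2) \<partial>lborel)"
proof -
  have cont: "continuous_on (ball a r) (\<lambda>z. W z * (cmod (g z / F z))^2)"
    using holomorphic_on_imp_continuous_on[OF holF] holomorphic_on_imp_continuous_on[OF holg] contW F0
    by (intro continuous_intros) auto
  have "ennreal (exp (- \<phi> a)) * (\<integral>\<^sup>+ z \<in> ball a r. ennreal (W z * (cmod (g z / F z))^2) \<partial>lborel) =
        (\<integral>\<^sup>+ z. ennreal (exp (- \<phi> a)) * (ennreal (W z * (cmod (g z / F z))^2) * indicator (ball a r) z) \<partial>lborel)"
    by (rule nn_integral_cmult[symmetric, OF meas_ball_cont[OF cont]])
  also have "\<dots> = (\<integral>\<^sup>+ z \<in> ball a r. ennreal ((cmod (g z))^2 * exp (- \<phi> z)) \<partial>lborel)"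
  proof (rule nn_integral_cong)
    fix z
    show "ennreal (exp (- \<phi> a)) * (ennreal (W z * (cmod (g z / F z))^2) * indicator (ball a r) z) =
          ennreal ((cmod (g z))^2 * exp (- \<phi> z)) * indicator (ball a r) z"
    proof (cases "z \<in> ball a r")
      case True
      have "(cmod (g z))^2 * exp (- \<phi> z) = (cmod (g z / F z))^2 * ((cmod (F z))^2 * exp (- \<phi> z))"
        using F0[OF True] by (simp add: norm_divide power_divide)
      also have "\<dots> = exp (- \<phi> a) * (W z * (cmod (g z / F z))^2)"
        using FW[OF True] by simp
      finally show ?thesis using True by (simp add: ennreal_mult')
    qed simp
  qed
  finally show ?thesis ..
qed

lemma harmonic_case:
  fixes \<phi> :: "complex \<Rightarrow> real"
  assumes \<Omega>: "open \<Omega>" and sm: "smooth_on \<Omega> \<phi>" and harm: "harmonic_on \<Omega> \<phi>"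
    and ar: "(a, r) \<in> Omega_delta \<Omega>"
  shows "L_index \<phi> a r = 1"
    "\<exists>f. f holomorphic_on ball a r \<and> f a = 1 \<and>
               (\<integral>\<^sup>+ z \<in> ball a r. ennreal ((cmod (f z))\<^sup>2 * exp (- \<phi> z)) \<partial>lborel)
                 \<le> ennreal (pi * r\<^sup>2 * exp (- \<phi> a)) \<and>
               (\<forall>g. g holomorphic_on ball a r \<and> g a = 1 \<and>
                  (\<integral>\<^sup>+ z \<in> ball a r. ennreal ((cmod (g z))\<^sup>2 * exp (- \<phi> z)) \<partial>lborel)
                    \<le> ennreal (pi * r\<^sup>2 * exp (- \<phi> a))
                  \<longrightarrow> (\<forall>z \<in> ball a r. g z = f z))"
proof -
  obtain R where aO: "a \<in> \<Omega>" and r: "0 < r" "r < R" and RO: "ball a R \<subseteq> \<Omega>"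
    using delta_ball[OF ar] by blast
  obtain F where holFR: "F holomorphic_on ball a R" and Fa: "F a = 1" and F0: "\<And>z. F z \<noteq> 0"
    and FW: "\<And>z. z \<in> ball a R \<Longrightarrow> (cmod (F z))^2 * exp (- \<phi> z) = exp (- \<phi> a)"
    using harm_factor[OF \<Omega> RO _ sm harm] r by auto
  have holF: "F holomorphic_on ball a r" by (rule holomorphic_on_subset[OF holFR]) (use r in auto)
  define B where "B = pi * r^2 * exp (- \<phi> a)"
  have Bpos: "B > 0" unfolding B_def using r by simp
  define NN where "NN g = (\<integral>\<^sup>+ z \<in> ball a r. ennreal ((cmod (g z))\<^sup>2 * exp (- \<phi> z)) \<partial>lborel)" for g
  have fac: "NN g = ennreal (exp (- \<phi> a)) * (\<integral>\<^sup>+ z \<in> ball a r. ennreal ((cmod (g z / F z))^2) \<partial>lborel)"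
    if holg: "g holomorphic_on ball a r" for g
    using nn_factor[OF holF _ _ _ holg, of "\<lambda>_. 1" \<phi>] F0 FW r unfolding NN_def by auto
  have hk: "(\<lambda>z. g z / F z) holomorphic_on ball a r" if "g holomorphic_on ball a r" for g
    by (intro holomorphic_intros that holF F0)
  have lower: "ennreal B \<le> NN g" if holg: "g holomorphic_on ball a r" and ga: "g a = 1" for g
  proof -
    have "ennreal (pi * r^2 * (cmod (g a / F a))^2) \<le> (\<integral>\<^sup>+ z \<in> ball a r. ennreal ((cmod (g z / F z))^2) \<partial>lborel)"
      by (rule hol_nn_lower[OF hk[OF holg] r(1)])
    then have "ennreal (exp (- \<phi> a)) * ennreal (pi * r^2) \<le> NN g"
      unfolding fac[OF holg] using ga Fa by (simp add: mult_left_mono)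
    then show ?thesis unfolding B_def using r by (simp add: ennreal_mult'[symmetric] mult.commute)
  qed
  have NNF: "NN F = ennreal B"
  proof -
    have "(\<integral>\<^sup>+ z \<in> ball a r. ennreal ((cmod (F z / F z))^2) \<partial>lborel) = (\<integral>\<^sup>+ z. indicator (ball a r) z \<partial>lborel)"
      by (intro nn_integral_cong) (simp add: F0)
    also have "\<dots> = ennreal (pi * r^2)" using emeasure_ball_complex[of r a] r by simp
    finally show ?thesis unfolding fac[OF holF] B_def using r by (simp add: ennreal_mult'[symmetric] mult.commute)
  qed
  have uniq: "\<forall>z \<in> ball a r. g z = F z" if holg: "g holomorphic_on ball a r" and ga: "g a = 1" and le: "NN g \<le> ennreal B" for g
  proof -
    have "ennreal (exp (- \<phi> a)) * (\<integral>\<^sup>+ z \<in> ball a r. ennreal ((cmod (g z / F z))^2) \<partial>lborel) \<le>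
          ennreal (exp (- \<phi> a)) * ennreal (pi * r^2)"
      using le unfolding fac[OF holg] B_def using r by (simp add: ennreal_mult'[symmetric] mult.commute)
    then have "(\<integral>\<^sup>+ z \<in> ball a r. ennreal ((cmod (g z / F z))^2) \<partial>lborel) \<le> ennreal (pi * r^2 * (cmod (g a / F a))^2)"
      using ga Fa by (subst (asm) ennreal_mult_le_mult_iff) auto
    from hol_nn_rigid[OF hk[OF holg] r(1) this]
    have "g z / F z = g a / F a" if "z \<in> ball a r" for z using that by blast
    then show ?thesis using ga Fa F0 by (auto simp: field_simps)
  qed
  show "\<exists>f. f holomorphic_on ball a r \<and> f a = 1 \<and>
               (\<integral>\<^sup>+ z \<in> ball a r. ennreal ((cmod (f z))\<^sup>2 * exp (- \<phi> z)) \<partial>lborel)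
                 \<le> ennreal (pi * r\<^sup>2 * exp (- \<phi> a)) \<and>
               (\<forall>g. g holomorphic_on ball a r \<and> g a = 1 \<and>
                  (\<integral>\<^sup>+ z \<in> ball a r. ennreal ((cmod (g z))\<^sup>2 * exp (- \<phi> z)) \<partial>lborel)
                    \<le> ennreal (pi * r\<^sup>2 * exp (- \<phi> a))
                  \<longrightarrow> (\<forall>z \<in> ball a r. g z = f z))"
  proof (intro exI[of _ F] conjI allI impI)
    show "F holomorphic_on ball a r" "F a = 1" by (fact holF, fact Fa)
    show "(\<integral>\<^sup>+ z \<in> ball a r. ennreal ((cmod (F z))\<^sup>2 * exp (- \<phi> z)) \<partial>lborel) \<le> ennreal (pi * r\<^sup>2 * exp (- \<phi> a))"
      using NNF unfolding NN_def B_def by simp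
    fix g assume g: "g holomorphic_on ball a r \<and> g a = 1 \<and>
                  (\<integral>\<^sup>+ z \<in> ball a r. ennreal ((cmod (g z))\<^sup>2 * exp (- \<phi> z)) \<partial>lborel)
                    \<le> ennreal (pi * r\<^sup>2 * exp (- \<phi> a))"
    show "\<forall>z \<in> ball a r. g z = F z"
      using uniq[of g] g unfolding NN_def B_def by simp
  qed
  define I where "I f = set_lebesgue_integral lborel (ball a r) (\<lambda>z. (cmod (f z))\<^sup>2 * exp (- \<phi> z))" for f :: "complex \<Rightarrow> complex"
  define S where "S = {I f / (pi * r\<^sup>2 * exp (- \<phi> a)) | f. f \<in> A2 (ball a r) \<phi> \<and> f a = 1}"
  have Lidx: "L_index \<phi> a r = Inf S" unfolding L_index_def S_def I_def ..
  have Ieq: "ennreal (I f) = NN f" if "f \<in> A2 (ball a r) \<phi>" for f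
    using that unfolding I_def NN_def A2_def by (intro set_int_nn) auto
  have FA2: "F \<in> A2 (ball a r) \<phi>" and IF: "I F = B"
  proof -
    have eq: "indicator (ball a r) z *\<^sub>R ((cmod (F z))\<^sup>2 * exp (- \<phi> z)) = indicator (ball a r) z *\<^sub>R exp (- \<phi> a)" for z
      using FW[of z] r by (auto simp: indicator_def)
    have "integrable lborel (\<lambda>z. indicator (ball a r) z *\<^sub>R exp (- \<phi> a))"
      using integrable_ball_cont[of a r "\<lambda>_. exp (- \<phi> a)"] by simp
    then have "set_integrable lborel (ball a r) (\<lambda>z. (cmod (F z))\<^sup>2 * exp (- \<phi> z))"
      unfolding set_integrable_def eq .
    then show "F \<in> A2 (ball a r) \<phi>" using holF unfolding A2_def by simp
    show "I F = B" unfolding I_def set_lebesgue_integral_def eq B_def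
      using integral_ball_const[of r a "exp (- \<phi> a)"] r by simp
  qed
  have "Inf S = 1"
  proof (rule cInf_eq_minimum)
    have I1: "I F / (pi * r\<^sup>2 * exp (- \<phi> a)) = 1" using IF Bpos r unfolding B_def by simp
    show "1 \<in> S" unfolding S_def mem_Collect_eq
      by (rule exI[of _ F]) (simp only: I1 FA2 Fa simp_thms)
    fix x assume "x \<in> S"
    then obtain f where f: "f \<in> A2 (ball a r) \<phi>" "f a = 1" and x: "x = I f / B"
      unfolding S_def B_def by blast
    have holf: "f holomorphic_on ball a r" using f(1) unfolding A2_def by simp
    have "ennreal B \<le> ennreal (I f)"
      using lower[OF holf f(2)] Ieq[OF f(1)] by simp
    then have "B \<le> I f"
    proof (rule contrapos_pp)
      assume "\<not> B \<le> I f"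
      then have "ennreal (I f) < ennreal B" using Bpos by (intro ennreal_lessI) auto
      then show "\<not> ennreal B \<le> ennreal (I f)" by simp
    qed
    then show "1 \<le> x" unfolding x using Bpos by simp
  qed
  then show "L_index \<phi> a r = 1" using Lidx by simp
qed

lemma nonharmonic_case:
  fixes \<phi> :: "complex \<Rightarrow> real"
  assumes \<Omega>: "open \<Omega>" and sm: "smooth_on \<Omega> \<phi>" and aO: "a \<in> \<Omega>" and lap: "laplacian \<phi> a \<noteq> 0"
  shows "\<exists>r. (a, r) \<in> Omega_delta \<Omega> \<and> L_index \<phi> a r \<noteq> 1 \<and>
      \<not> (\<exists>f. f holomorphic_on ball a r \<and> f a = 1 \<and>
               (\<integral>\<^sup>+ z \<in> ball a r. ennreal ((cmod (f z))\<^sup>2 * exp (- \<phi> z)) \<partial>lborel)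
                 \<le> ennreal (pi * r\<^sup>2 * exp (- \<phi> a)) \<and>
               (\<forall>g. g holomorphic_on ball a r \<and> g a = 1 \<and>
                  (\<integral>\<^sup>+ z \<in> ball a r. ennreal ((cmod (g z))\<^sup>2 * exp (- \<phi> z)) \<partial>lborel)
                    \<le> ennreal (pi * r\<^sup>2 * exp (- \<phi> a))
                  \<longrightarrow> (\<forall>z \<in> ball a r. g z = f z)))"
proof -
  obtain F R0 where R0: "R0 > 0" "ball a R0 \<subseteq> \<Omega>" and holFU: "F holomorphic_on UNIV" and Fa: "F a = 1"
    and F0: "\<And>z. F z \<noteq> 0"
    and Wexp0: "\<And>z. z \<in> ball a R0 \<Longrightarrow> \<exists>E. \<bar>E\<bar> \<le> \<bar>laplacian \<phi> a / 4\<bar> / 2 * (cmod (z - a))^2 \<and>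
        (cmod (F z))^2 * exp (- \<phi> z) = exp (- \<phi> a) * exp (- (laplacian \<phi> a / 4) * (cmod (z - a))^2 - E)"
    by (rule weight_expansion[OF \<Omega> aO sm lap]) blast
  define c where "c = laplacian \<phi> a / 4"
  have c0: "c \<noteq> 0" using lap unfolding c_def by simp
  define r where "r = R0 / 2"
  have r: "0 < r" "r < R0" using R0 unfolding r_def by auto
  have ar: "(a, r) \<in> Omega_delta \<Omega>" by (rule ball_delta[OF aO r(1) r(2) R0(2)])
  have holF: "F holomorphic_on ball a r" using holFU by (rule holomorphic_on_subset) auto
  define W where "W z = (cmod (F z))^2 * exp (- \<phi> z) / exp (- \<phi> a)" for z
  have FW: "(cmod (F z))^2 * exp (- \<phi> z) = exp (- \<phi> a) * W z" for z
    unfolding W_def by simp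
  have Wexp: "\<exists>E. \<bar>E\<bar> \<le> \<bar>c\<bar> / 2 * (cmod (z - a))^2 \<and> W z = exp (- c * (cmod (z - a))^2 - E)"
    if "z \<in> ball a r" for z
  proof -
    have "z \<in> ball a R0" using that r by auto
    from Wexp0[OF this] obtain E where "\<bar>E\<bar> \<le> \<bar>c\<bar> / 2 * (cmod (z - a))^2"
      "(cmod (F z))^2 * exp (- \<phi> z) = exp (- \<phi> a) * exp (- c * (cmod (z - a))^2 - E)"
      unfolding c_def by auto
    then show ?thesis unfolding W_def by auto
  qed
  have cont\<phi>: "continuous_on \<Omega> \<phi>"
    using smooth_C2(1)[OF sm] by (rule differentiable_imp_continuous_on)
  have contFe: "continuous_on (cball a r) (\<lambda>z. (cmod (F z))^2 * exp (- \<phi> z))"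
  proof -
    have "continuous_on (cball a r) F"
      using holomorphic_on_imp_continuous_on[OF holFU] by (rule continuous_on_subset) auto
    moreover have "continuous_on (cball a r) \<phi>"
      by (rule continuous_on_subset[OF cont\<phi>]) (use r R0 in auto)
    ultimately show ?thesis by (intro continuous_intros)
  qed
  have contW: "continuous_on (cball a r) W" unfolding W_def by (intro continuous_intros contFe) simp
  have contWb: "continuous_on (ball a r) W" by (rule continuous_on_subset[OF contW]) auto
  define B where "B = pi * r^2 * exp (- \<phi> a)"
  have Bpos: "B > 0" unfolding B_def using r by simp
  define NN where "NN g = (\<integral>\<^sup>+ z \<in> ball a r. ennreal ((cmod (g z))\<^sup>2 * exp (- \<phi> z)) \<partial>lborel)" for g
  define I where "I f = set_lebesgue_integral lborel (ball a r) (\<lambda>z. (cmod (f z))\<^sup>2 * exp (- \<phi> z))" for f :: "complex \<Rightarrow> complex"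
  define S where "S = {I f / (pi * r\<^sup>2 * exp (- \<phi> a)) | f. f \<in> A2 (ball a r) \<phi> \<and> f a = 1}"
  have Lidx: "L_index \<phi> a r = Inf S" unfolding L_index_def S_def I_def ..
  have Ieq: "ennreal (I f) = NN f" if "f \<in> A2 (ball a r) \<phi>" for f
    using that unfolding I_def NN_def A2_def by (intro set_int_nn) auto
  have intF: "set_integrable lborel (ball a r) (\<lambda>z. (cmod (F z))\<^sup>2 * exp (- \<phi> z))"
    unfolding set_integrable_def by (rule integrable_ball_cont[OF contFe])
  have FA2: "F \<in> A2 (ball a r) \<phi>" using holF intF unfolding A2_def by simp
  have Inn: "0 \<le> I f" for f unfolding I_def set_lebesgue_integral_def
    by (rule Bochner_Integration.integral_nonneg) simp
  have Sbdd: "bdd_below S" unfolding S_def bdd_below_def using Inn Bpos unfolding B_def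
    by (intro exI[of _ 0]) auto
  have RFS: "I F / B \<in> S" unfolding S_def B_def using FA2 Fa by blast
  have IF: "I F = exp (- \<phi> a) * integral\<^sup>L lborel (\<lambda>z. indicator (ball a r) z * W z)"
  proof -
    have "I F = integral\<^sup>L lborel (\<lambda>z. exp (- \<phi> a) * (indicator (ball a r) z * W z))"
      unfolding I_def set_lebesgue_integral_def by (intro Bochner_Integration.integral_cong refl) (simp add: FW)
    then show ?thesis by simp
  qed
  have fac: "NN g = ennreal (exp (- \<phi> a)) * (\<integral>\<^sup>+ z \<in> ball a r. ennreal (W z * (cmod (g z / F z))^2) \<partial>lborel)"
    if holg: "g holomorphic_on ball a r" for g
    unfolding NN_def by (rule nn_factor[OF holF _ contWb _ holg]) (use F0 FW in auto)
  show ?thesis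
  proof (cases "c > 0")
    case True
    have W1: "W z \<le> 1" if zb: "z \<in> ball a r" for z
    proof -
      obtain E where E: "\<bar>E\<bar> \<le> \<bar>c\<bar> / 2 * (cmod (z - a))^2" "W z = exp (- c * (cmod (z - a))^2 - E)"
        using Wexp[OF zb] by blast
      have "- c * (cmod (z - a))^2 - E \<le> 0" using E(1) True by (simp add: abs_le_iff)
      then show ?thesis using E(2) by simp
    qed
    define z1 where "z1 = a + of_real (r / 2)"
    have z1: "z1 \<in> ball a r" "cmod (z1 - a) = r / 2" using r unfolding z1_def by (auto simp: dist_norm)
    have W1s: "W z1 < 1"
    proof -
      obtain E where E: "\<bar>E\<bar> \<le> \<bar>c\<bar> / 2 * (cmod (z1 - a))^2" "W z1 = exp (- c * (cmod (z1 - a))^2 - E)"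
        using Wexp[OF z1(1)] by blast
      have "0 < cmod (z1 - a)" unfolding z1(2) using r by simp
      then have "0 < c * (cmod (z1 - a))^2" using True by simp
      then have "- c * (cmod (z1 - a))^2 - E < 0" using E(1) True by (simp add: abs_le_iff)
      then show ?thesis using E(2) by simp
    qed
    have IFB: "I F < B"
    proof -
      have "integral\<^sup>L lborel (\<lambda>z. indicator (ball a r) z * W z) < pi * r^2"
        by (rule integral_strict_less[OF contW r(1) W1 z1(1) W1s])
      then show ?thesis unfolding IF B_def by (simp add: mult.commute)
    qed
    have L1: "L_index \<phi> a r \<noteq> 1"
    proof -
      have "Inf S \<le> I F / B" by (rule cInf_lower[OF RFS Sbdd])
      also have "\<dots> < 1" using IFB Bpos by simp
      finally show ?thesis using Lidx by simp
    qed
    have NF: "NN F = ennreal (I F)" using Ieq[OF FA2] by simp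
    have nex: "\<not> (\<exists>f. f holomorphic_on ball a r \<and> f a = 1 \<and> NN f \<le> ennreal B \<and>
               (\<forall>g. g holomorphic_on ball a r \<and> g a = 1 \<and> NN g \<le> ennreal B \<longrightarrow> (\<forall>z \<in> ball a r. g z = f z)))"
    proof
      assume "\<exists>f. f holomorphic_on ball a r \<and> f a = 1 \<and> NN f \<le> ennreal B \<and>
               (\<forall>g. g holomorphic_on ball a r \<and> g a = 1 \<and> NN g \<le> ennreal B \<longrightarrow> (\<forall>z \<in> ball a r. g z = f z))"
      then obtain f where uq: "\<And>g. g holomorphic_on ball a r \<Longrightarrow> g a = 1 \<Longrightarrow> NN g \<le> ennreal B \<Longrightarrow> (\<forall>z \<in> ball a r. g z = f z)"
        by blast
      have "NN F \<le> ennreal B" unfolding NF using IFB by (intro ennreal_leI) simp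
      then have "F z1 = f z1" using uq[OF holF Fa] z1(1) by blast
      define \<epsilon> where "\<epsilon> = min (1 / r) ((B - I F) / (3 * B * r))"
      have \<epsilon>: "\<epsilon> > 0" "\<epsilon> * r \<le> 1" "\<epsilon> * r \<le> (B - I F) / (3 * B)"
      proof -
        have p1: "1 / r > 0" using r by simp
        have p2: "(B - I F) / (3 * B * r) > 0" using r IFB Bpos by simp
        show "\<epsilon> > 0" unfolding \<epsilon>_def using p1 p2 by simp
        have "\<epsilon> \<le> 1 / r" unfolding \<epsilon>_def by simp
        then have "\<epsilon> * r \<le> 1 / r * r" using r by (intro mult_right_mono) auto
        then show "\<epsilon> * r \<le> 1" using r by simp
        have "\<epsilon> \<le> (B - I F) / (3 * B * r)" unfolding \<epsilon>_def by simp
        then have "\<epsilon> * r \<le> (B - I F) / (3 * B * r) * r" using r by (intro mult_right_mono) auto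
        then show "\<epsilon> * r \<le> (B - I F) / (3 * B)" using r by simp
      qed
      define F2 where "F2 z = F z * (1 + of_real \<epsilon> * (z - a))" for z
      have holF2: "F2 holomorphic_on ball a r" unfolding F2_def by (intro holomorphic_intros holF)
      have F2a: "F2 a = 1" unfolding F2_def using Fa by simp
      have q: "(1 + \<epsilon> * r)^2 * I F \<le> B"
      proof -
        have "(1 + \<epsilon> * r)^2 \<le> 1 + 3 * (\<epsilon> * r)"
          using \<epsilon> r by (simp add: power2_eq_square algebra_simps mult_left_le_one_le mult_le_one)
        also have "\<dots> \<le> 1 + (B - I F) / B" using \<epsilon>(3) Bpos by (simp add: field_simps)
        finally have "(1 + \<epsilon> * r)^2 * I F \<le> (1 + (B - I F) / B) * I F"
          by (rule mult_right_mono) (rule Inn)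
        also have "\<dots> = I F + (B - I F) * (I F / B)" using Bpos by (simp add: field_simps)
        also have "\<dots> \<le> I F + (B - I F) * 1"
          using IFB Bpos Inn[of F] by (intro add_left_mono mult_left_mono) auto
        finally show ?thesis by simp
      qed
      have "NN F2 \<le> ennreal B"
      proof -
        have contb: "continuous_on (ball a r) (\<lambda>z. (cmod (F z))\<^sup>2 * exp (- \<phi> z))"
          by (rule continuous_on_subset[OF contFe]) auto
        have "NN F2 \<le> (\<integral>\<^sup>+ z. ennreal ((1 + \<epsilon> * r)^2) * (ennreal ((cmod (F z))\<^sup>2 * exp (- \<phi> z)) * indicator (ball a r) z) \<partial>lborel)"
          unfolding NN_def
        proof (rule nn_integral_mono)
          fix z
          show "ennreal ((cmod (F2 z))\<^sup>2 * exp (- \<phi> z)) * indicator (ball a r) z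
               \<le> ennreal ((1 + \<epsilon> * r)^2) * (ennreal ((cmod (F z))\<^sup>2 * exp (- \<phi> z)) * indicator (ball a r) z)"
          proof (cases "z \<in> ball a r")
            case True
            have "cmod (1 + of_real \<epsilon> * (z - a)) \<le> 1 + \<epsilon> * r"
            proof -
              have "cmod (1 + of_real \<epsilon> * (z - a)) \<le> 1 + cmod (of_real \<epsilon> * (z - a))"
                using norm_triangle_ineq[of 1 "of_real \<epsilon> * (z - a)"] by simp
              also have "cmod (of_real \<epsilon> * (z - a)) = \<epsilon> * cmod (z - a)" using \<epsilon> by (simp add: norm_mult)
              also have "\<epsilon> * cmod (z - a) \<le> \<epsilon> * r"
                using True \<epsilon> by (intro mult_left_mono) (auto simp: dist_norm norm_minus_commute)
              finally show ?thesis by simp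
            qed
            then have "(cmod (1 + of_real \<epsilon> * (z - a)))^2 \<le> (1 + \<epsilon> * r)^2"
              by (intro power_mono) auto
            then have "(cmod (F z))^2 * (cmod (1 + of_real \<epsilon> * (z - a)))^2 \<le> (cmod (F z))^2 * (1 + \<epsilon> * r)^2"
              by (rule mult_left_mono) simp
            then have "(cmod (F z))^2 * (cmod (1 + of_real \<epsilon> * (z - a)))^2 * exp (- \<phi> z) \<le> (cmod (F z))^2 * (1 + \<epsilon> * r)^2 * exp (- \<phi> z)"
              by (rule mult_right_mono) simp
            then have "(cmod (F2 z))\<^sup>2 * exp (- \<phi> z) \<le> (1 + \<epsilon> * r)^2 * ((cmod (F z))\<^sup>2 * exp (- \<phi> z))"
              unfolding F2_def norm_mult power_mult_distrib by (simp add: mult_ac)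
            then show ?thesis using True by (simp add: ennreal_mult'[symmetric] ennreal_leI)
          qed simp
        qed
        also have "\<dots> = ennreal ((1 + \<epsilon> * r)^2) * NN F"
          unfolding NN_def by (rule nn_integral_cmult[OF meas_ball_cont[OF contb]])
        also have "\<dots> = ennreal ((1 + \<epsilon> * r)^2 * I F)" unfolding NF by (simp add: ennreal_mult')
        also have "\<dots> \<le> ennreal B" using q by (rule ennreal_leI)
        finally show ?thesis .
      qed
      then have "F2 z1 = f z1" using uq[OF holF2 F2a] z1 by blast
      with \<open>F z1 = f z1\<close> have "F z1 * (of_real \<epsilon> * (z1 - a)) = 0"
        unfolding F2_def by (simp add: algebra_simps)
      then show False using F0[of z1] \<epsilon> z1 r by auto
    qed
    show ?thesis
      by (intro exI[of _ r] conjI ar L1) (use nex in \<open>simp add: NN_def B_def\<close>)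
  next
    case False
    then have cneg: "c < 0" using c0 by simp
    define \<eta> where "\<eta> = - c * r^2 / 8"
    have "c * r^2 < 0" using cneg r by (intro mult_neg_pos) auto
    then have \<eta>: "\<eta> > 0" unfolding \<eta>_def by simp
    have W1: "1 \<le> W z" if zb: "z \<in> ball a r" for z
    proof -
      obtain E where E: "\<bar>E\<bar> \<le> \<bar>c\<bar> / 2 * (cmod (z - a))^2" "W z = exp (- c * (cmod (z - a))^2 - E)"
        using Wexp[OF zb] by blast
      have "0 \<le> - c * (cmod (z - a))^2 - E" using E(1) cneg by (simp add: abs_le_iff)
      then show ?thesis using E(2) by simp
    qed
    have W2: "1 + \<eta> \<le> W z" if zb: "z \<in> ball a r" and zr: "r / 2 \<le> cmod (z - a)" for z
    proof -
      obtain E where E: "\<bar>E\<bar> \<le> \<bar>c\<bar> / 2 * (cmod (z - a))^2" "W z = exp (- c * (cmod (z - a))^2 - E)"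
        using Wexp[OF zb] by blast
      have "(r/2)^2 \<le> (cmod (z - a))^2" using zr r by (intro power_mono) auto
      then have "\<eta> \<le> - c / 2 * (cmod (z - a))^2" unfolding \<eta>_def using cneg
        by (simp add: power2_eq_square field_simps mult_left_mono_neg)
      also have "\<dots> \<le> - c * (cmod (z - a))^2 - E" using E(1) cneg by (simp add: abs_le_iff)
      finally have "exp \<eta> \<le> W z" using E(2) by simp
      moreover have "1 + \<eta> \<le> exp \<eta>" by (rule exp_ge_add_one_self)
      ultimately show ?thesis by linarith
    qed
    define q where "q = 1 + 3 * \<eta> / 4"
    have q: "q > 1" unfolding q_def using \<eta> by simp
    have low: "ennreal (B * q) \<le> NN g" if holg: "g holomorphic_on ball a r" and ga: "g a = 1" for g
    proof -
      have hk: "(\<lambda>z. g z / F z) holomorphic_on ball a r" by (intro holomorphic_intros holg holF F0)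
      have "ennreal (pi * r^2 * (1 + 3 * \<eta> / 4)) \<le> (\<integral>\<^sup>+ z \<in> ball a r. ennreal (W z * (cmod (g z / F z))^2) \<partial>lborel)"
        by (rule weighted_lower[OF hk r(1) _ _ W1 W2]) (use ga Fa \<eta> in auto)
      then have "ennreal (exp (- \<phi> a)) * ennreal (pi * r^2 * q) \<le> NN g"
        unfolding fac[OF holg] q_def by (rule mult_left_mono) simp
      then show ?thesis unfolding B_def using r by (simp add: ennreal_mult'[symmetric] mult_ac)
    qed
    have L1: "L_index \<phi> a r \<noteq> 1"
    proof -
      have "q \<le> Inf S"
      proof (rule cInf_greatest)
        show "S \<noteq> {}" using RFS by blast
        fix x assume "x \<in> S"
        then obtain f where f: "f \<in> A2 (ball a r) \<phi>" "f a = 1" and x: "x = I f / B"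
          unfolding S_def B_def by blast
        have holf: "f holomorphic_on ball a r" using f(1) unfolding A2_def by simp
        have "ennreal (B * q) \<le> ennreal (I f)" using low[OF holf f(2)] Ieq[OF f(1)] by simp
        then have "B * q \<le> I f"
        proof (rule contrapos_pp)
          assume "\<not> B * q \<le> I f"
          then have "ennreal (I f) < ennreal (B * q)" using Bpos q by (intro ennreal_lessI) auto
          then show "\<not> ennreal (B * q) \<le> ennreal (I f)" by simp
        qed
        then show "q \<le> x" unfolding x using Bpos by (simp add: field_simps)
      qed
      then show ?thesis using Lidx q by auto
    qed
    have nex: "\<not> (\<exists>f. f holomorphic_on ball a r \<and> f a = 1 \<and> NN f \<le> ennreal B)"
    proof
      assume "\<exists>f. f holomorphic_on ball a r \<and> f a = 1 \<and> NN f \<le> ennreal B"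
      then obtain f where f: "f holomorphic_on ball a r" "f a = 1" "NN f \<le> ennreal B" by blast
      have "ennreal (B * q) \<le> ennreal B" using low[OF f(1,2)] f(3) by simp
      then have "B * q \<le> B" using Bpos by simp
      then show False using Bpos q by simp
    qed
    show ?thesis
      by (intro exI[of _ r] conjI ar L1) (use nex in \<open>auto simp: NN_def B_def\<close>)
  qed
qed

theorem theorem1p7:
  fixes \<Omega> :: "complex set" and \<phi> :: "complex \<Rightarrow> real"
  assumes "open \<Omega>" and "connected \<Omega>" and "\<Omega> \<noteq> {}"
    and "smooth_on \<Omega> \<phi>"
  shows "(harmonic_on \<Omega> \<phi> \<longleftrightarrow> (\<forall>(a, r) \<in> Omega_delta \<Omega>. L_index \<phi> a r = 1))
       \<and> (harmonic_on \<Omega> \<phi> \<longleftrightarrow>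
          (\<forall>(a, r) \<in> Omega_delta \<Omega>.
             \<exists>f. f holomorphic_on ball a r \<and> f a = 1 \<and>
               (\<integral>\<^sup>+ z \<in> ball a r. ennreal ((cmod (f z))\<^sup>2 * exp (- \<phi> z)) \<partial>lborel)
                 \<le> ennreal (pi * r\<^sup>2 * exp (- \<phi> a)) \<and>
               (\<forall>g. g holomorphic_on ball a r \<and> g a = 1 \<and>
                  (\<integral>\<^sup>+ z \<in> ball a r. ennreal ((cmod (g z))\<^sup>2 * exp (- \<phi> z)) \<partial>lborel)
                    \<le> ennreal (pi * r\<^sup>2 * exp (- \<phi> a))
                  \<longrightarrow> (\<forall>z \<in> ball a r. g z = f z))))"
proof -
  note \<Omega> = assms(1) and sm = assms(4)
  have H1: "harmonic_on \<Omega> \<phi> \<longleftrightarrow> (\<forall>(a, r) \<in> Omega_delta \<Omega>. L_index \<phi> a r = 1)"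
  proof
    assume h: "harmonic_on \<Omega> \<phi>"
    show "\<forall>(a, r) \<in> Omega_delta \<Omega>. L_index \<phi> a r = 1"
      using harmonic_case(1)[OF \<Omega> sm h] by auto
  next
    assume all: "\<forall>(a, r) \<in> Omega_delta \<Omega>. L_index \<phi> a r = 1"
    show "harmonic_on \<Omega> \<phi>" unfolding harmonic_on_def
    proof (rule ballI, rule ccontr)
      fix a assume a: "a \<in> \<Omega>" and lap: "laplacian \<phi> a \<noteq> 0"
      obtain r where ar: "(a, r) \<in> Omega_delta \<Omega>" and L: "L_index \<phi> a r \<noteq> 1"
        using nonharmonic_case[OF \<Omega> sm a lap] by blast
      from all ar have "L_index \<phi> a r = 1" by auto
      with L show False by simp
    qed
  qed
  define P where "P a r \<longleftrightarrow> (\<exists>f. f holomorphic_on ball a r \<and> f a = 1 \<and>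
               (\<integral>\<^sup>+ z \<in> ball a r. ennreal ((cmod (f z))\<^sup>2 * exp (- \<phi> z)) \<partial>lborel)
                 \<le> ennreal (pi * r\<^sup>2 * exp (- \<phi> a)) \<and>
               (\<forall>g. g holomorphic_on ball a r \<and> g a = 1 \<and>
                  (\<integral>\<^sup>+ z \<in> ball a r. ennreal ((cmod (g z))\<^sup>2 * exp (- \<phi> z)) \<partial>lborel)
                    \<le> ennreal (pi * r\<^sup>2 * exp (- \<phi> a))
                  \<longrightarrow> (\<forall>z \<in> ball a r. g z = f z)))" for a r
  have H2: "harmonic_on \<Omega> \<phi> \<longleftrightarrow> (\<forall>(a, r) \<in> Omega_delta \<Omega>. P a r)"
  proof
    assume h: "harmonic_on \<Omega> \<phi>"
    show "\<forall>(a, r) \<in> Omega_delta \<Omega>. P a r"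
    proof (clarify)
      fix a r assume "(a, r) \<in> Omega_delta \<Omega>"
      from harmonic_case(2)[OF \<Omega> sm h this] show "P a r" unfolding P_def .
    qed
  next
    assume all: "\<forall>(a, r) \<in> Omega_delta \<Omega>. P a r"
    show "harmonic_on \<Omega> \<phi>" unfolding harmonic_on_def
    proof (rule ballI, rule ccontr)
      fix a assume a: "a \<in> \<Omega>" and lap: "laplacian \<phi> a \<noteq> 0"
      obtain r where ar: "(a, r) \<in> Omega_delta \<Omega>" and nP: "\<not> P a r"
        using nonharmonic_case[OF \<Omega> sm a lap] unfolding P_def by blast
      from all ar have "P a r" by auto
      with nP show False by simp
    qed
  qed
  show ?thesis using H1 H2 unfolding P_def by blast
qed

end
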